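(* Let $m \geq 2$. Every $L \in \mathscr{C}(m)$ satisfies $g(L) \geq 2$. Moreover, for each integer $g \geq 2$ there are only finitely many languages $L\in\mathscr{C}(m)$ (over a fixed $m$-letter alphabet) with $g(L) = g$.
   Context: A DFA over a finite alphabet $\Sigma$ is $(Q,q_0,F,\delta)$ with total transition function $\delta:Q\times\Sigma\to Q$. Its underlying undirected multigraph has vertex set $Q$ and one edge joining $q$ and $\delta(q,a)$ for every $(q,a)$ (self-loops and parallel edges kept). A cycle of length $k$ is a closed walk of length $k$ in this multigraph; it is simple if no edge is used more than once. The genus of a finite multigraph is the least genus of a closed orientable surface into which it embeds; $g(A)$ is the genus of the underlying multigraph of $A$; $g(L)=\min\{g(A): A\text{ a DFA recognizing }L\}$. $\rho(m)=3$ if $m\geq 4$, $\rho(3)=4$, $\rho(2)=5$. $\mathscr{C}(m)$ is the class of regular languages over an $m$-letter alphabet whose minimal DFA has an underlying undirected multigraph with no simple cycle of length $\leq \rho(m)-1$. *)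

theory Defs
  imports Main "HOL-Library.Cardinality"
begin

text \<open>States are natural numbers (every finite DFA is isomorphic to one with such states);
  the alphabet is the finite type 'a, so m = CARD('a).  The transition function is total
  on the state set Q.\<close>

record 'a dfa =
  states :: "nat set"
  init   :: nat
  final  :: "nat set"
  trans  :: "nat \<Rightarrow> 'a \<Rightarrow> nat"

definition is_dfa :: "'a dfa \<Rightarrow> bool" where
  "is_dfa A \<longleftrightarrow> finite (states A) \<and> init A \<in> states A \<and> final A \<subseteq> states A
     \<and> (\<forall>q\<in>states A. \<forall>a. trans A q a \<in> states A)"

definition lang :: "'a dfa \<Rightarrow> 'a list set" where
  "lang A = {w. foldl (trans A) (init A) w \<in> final A}"

definition regular :: "'a list set \<Rightarrow> bool" where
  "regular L \<longleftrightarrow> (\<exists>A. is_dfa A \<and> lang A = L)"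

definition minimal_dfa :: "'a dfa \<Rightarrow> 'a list set \<Rightarrow> bool" where
  "minimal_dfa A L \<longleftrightarrow> is_dfa A \<and> lang A = L \<and>
     (\<forall>B. is_dfa B \<and> lang B = L \<longrightarrow> card (states A) \<le> card (states B))"

definition edges :: "'a dfa \<Rightarrow> (nat \<times> 'a) set" where
  "edges A = states A \<times> UNIV"

definition joins :: "'a dfa \<Rightarrow> nat \<times> 'a \<Rightarrow> nat \<Rightarrow> nat \<Rightarrow> bool" where
  "joins A e u v \<longleftrightarrow> (u = fst e \<and> v = trans A (fst e) (snd e))
                     \<or> (v = fst e \<and> u = trans A (fst e) (snd e))"

definition has_simple_cycle :: "'a dfa \<Rightarrow> nat \<Rightarrow> bool" where
  "has_simple_cycle A k \<longleftrightarrow> k \<ge> 1 \<and>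
     (\<exists>vs es. length vs = Suc k \<and> length es = k \<and> distinct es \<and> set es \<subseteq> edges A
        \<and> vs ! 0 = vs ! k \<and> (\<forall>i<k. joins A (es ! i) (vs ! i) (vs ! Suc i)))"

text \<open>Darts: each edge e gives two darts (e,True) (at the end fst e) and (e,False)
  (at the end \<delta>(e)).  The edge involution flips the Boolean.\<close>
definition darts :: "'a dfa \<Rightarrow> ((nat \<times> 'a) \<times> bool) set" where
  "darts A = edges A \<times> UNIV"

definition dart_vertex :: "'a dfa \<Rightarrow> (nat \<times> 'a) \<times> bool \<Rightarrow> nat" where
  "dart_vertex A d = (if snd d then fst (fst d) else trans A (fst (fst d)) (snd (fst d)))"

definition flip :: "(nat \<times> 'a) \<times> bool \<Rightarrow> (nat \<times> 'a) \<times> bool" where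
  "flip d = (fst d, \<not> snd d)"

definition orbit_of :: "('b \<Rightarrow> 'b) \<Rightarrow> 'b \<Rightarrow> 'b set" where
  "orbit_of f x = {(f ^^ n) x | n. True}"

text \<open>A rotation system: a permutation of the darts whose cycles are exactly the sets of
  darts at each vertex (a cyclic order of the darts around every vertex).\<close>
definition rotation_system :: "'a dfa \<Rightarrow> ((nat \<times> 'a) \<times> bool \<Rightarrow> (nat \<times> 'a) \<times> bool) \<Rightarrow> bool" where
  "rotation_system A \<sigma> \<longleftrightarrow> bij_betw \<sigma> (darts A) (darts A) \<and>
     (\<forall>d\<in>darts A. orbit_of \<sigma> d = {d'\<in>darts A. dart_vertex A d' = dart_vertex A d})"

text \<open>Faces of the embedding given by \<sigma>: orbits of \<sigma> \<circ> flip on the darts.\<close>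
definition num_faces :: "'a dfa \<Rightarrow> ((nat \<times> 'a) \<times> bool \<Rightarrow> (nat \<times> 'a) \<times> bool) \<Rightarrow> nat" where
  "num_faces A \<sigma> = card {orbit_of (\<sigma> \<circ> flip) d | d. d \<in> darts A}"

definition adj_rel :: "'a dfa \<Rightarrow> (nat \<times> nat) set" where
  "adj_rel A = {(u, v). \<exists>e\<in>edges A. joins A e u v}"

definition num_components :: "'a dfa \<Rightarrow> nat" where
  "num_components A = card (states A // ((adj_rel A)\<^sup>* \<inter> states A \<times> states A))"

text \<open>Genus of the underlying multigraph: least g such that some rotation system satisfies
  the Euler formula V - E + F = 2c - 2g (c = number of components; every vertex has
  positive degree since the alphabet is nonempty).  By the Heffter-Edmonds-Ringel
  rotation principle this is the least genus of an orientable surface into which the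
  multigraph embeds.\<close>
definition dfa_genus :: "'a dfa \<Rightarrow> nat" where
  "dfa_genus A = (LEAST g. \<exists>\<sigma>. rotation_system A \<sigma> \<and>
      int (card (states A)) - int (card (edges A)) + int (num_faces A \<sigma>)
        = 2 * int (num_components A) - 2 * int g)"

definition lang_genus :: "'a list set \<Rightarrow> nat" where
  "lang_genus L = (LEAST g. \<exists>A. is_dfa A \<and> lang A = L \<and> dfa_genus A = g)"

definition rho :: "nat \<Rightarrow> nat" where
  "rho m = (if m \<ge> 4 then 3 else if m = 3 then 4 else 5)"

definition classC :: "'a::finite list set set" where
  "classC = {L. regular L \<and> (\<exists>A. minimal_dfa A L \<and>
      (\<forall>k. k \<le> rho CARD('a) - 1 \<longrightarrow> \<not> has_simple_cycle A k))}"

end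

theory Submission
  imports Defs "HOL-Combinatorics.Permutations"
begin

lemma orb_self: "x \<in> orbit_of f x"
  unfolding orbit_of_def by (auto intro: exI[of _ 0])

lemma orb_iter: "(f ^^ n) x \<in> orbit_of f x"
  unfolding orbit_of_def by auto

lemma orb_step: assumes "y \<in> orbit_of f x" shows "f y \<in> orbit_of f x"
proof -
  obtain n where "y = (f ^^ n) x" using assms unfolding orbit_of_def by auto
  then have "f y = (f ^^ Suc n) x" by simp
  then show ?thesis unfolding orbit_of_def by blast
qed

lemma orb_trans: assumes "y \<in> orbit_of f x" "z \<in> orbit_of f y" shows "z \<in> orbit_of f x"
proof -
  obtain n where n: "y = (f ^^ n) x" using assms(1) unfolding orbit_of_def by auto
  obtain m where m: "z = (f ^^ m) y" using assms(2) unfolding orbit_of_def by auto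
  have "z = (f ^^ (m + n)) x" by (simp add: m n funpow_add)
  then show ?thesis unfolding orbit_of_def by blast
qed

lemma fp_in: assumes "f ` D \<subseteq> D" "x \<in> D" shows "(f ^^ n) x \<in> D"
proof (induct n)
  case (Suc n) then show ?case using assms(1) by (simp add: image_subset_iff)
qed (simp add: assms)

lemma orb_sub: assumes "f ` D \<subseteq> D" "x \<in> D" shows "orbit_of f x \<subseteq> D"
  unfolding orbit_of_def using fp_in[OF assms] by blast

lemma orb_closed: assumes "x \<in> S" "\<forall>y\<in>S. f y \<in> S" shows "orbit_of f x \<subseteq> S"
proof -
  have "(f ^^ n) x \<in> S" for n by (induct n) (use assms in auto)
  then show ?thesis unfolding orbit_of_def by auto
qed

lemma period: assumes "bij_betw f D D" "finite D" "x \<in> D" shows "\<exists>p>0. (f ^^ p) x = x"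
proof -
  define g where "g = (\<lambda>x. if x \<in> D then f x else x)"
  have "bij_betw g D D" using assms(1) unfolding g_def by (rule bij_betw_cong[THEN iffD1, rotated]) auto
  then have "g permutes D" by (rule bij_imp_permutes) (auto simp: g_def)
  then have "permutation g" using assms(2) permutation_permutes by blast
  then obtain n where n: "n > 0" "(g ^^ n) x = x" using permutation_self by metis
  have fD: "f ` D \<subseteq> D" using assms(1) bij_betw_imp_surj_on by blast
  have "(g ^^ k) x = (f ^^ k) x" for k
    by (induct k) (use fp_in[OF fD assms(3)] in \<open>auto simp: g_def\<close>)
  then show ?thesis using n by metis
qed

lemma fD_of: "bij_betw f D D \<Longrightarrow> f ` D \<subseteq> D" using bij_betw_imp_surj_on by blast

lemma orb_sym: assumes "bij_betw f D D" "finite D" "x \<in> D" "y \<in> orbit_of f x"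
  shows "x \<in> orbit_of f y"
proof -
  obtain n where y: "y = (f ^^ n) x" using assms(4) unfolding orbit_of_def by auto
  obtain p where p: "p > 0" "(f ^^ p) x = x" using period[OF assms(1-3)] by auto
  have "(f ^^ (p * n - n)) y = (f ^^ (p * n - n + n)) x" by (simp add: y funpow_add)
  also have "p * n - n + n = p * n" using p by (simp add: le_add_diff_inverse2)
  also have "(f ^^ (p * n)) x = x" using funpow_mod_eq[OF p(2), of "p*n"] by simp
  finally show ?thesis unfolding orbit_of_def by auto
qed

lemma orb_eq: assumes "bij_betw f D D" "finite D" "x \<in> D" "y \<in> orbit_of f x"
  shows "orbit_of f y = orbit_of f x"
proof
  show "orbit_of f y \<subseteq> orbit_of f x" using orb_trans[OF assms(4)] by blast
  show "orbit_of f x \<subseteq> orbit_of f y" using orb_trans[OF orb_sym[OF assms]] by blast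
qed

lemma orb_eq2: assumes "bij_betw f D D" "finite D" "x \<in> D" "z \<in> orbit_of f x" "z \<in> orbit_of f y" "y \<in> D"
  shows "orbit_of f y = orbit_of f x"
  using orb_eq[OF assms(1,2,3,4)] orb_eq[OF assms(1,2,6,5)] by simp

lemma orb_cong: assumes "\<forall>y\<in>D. f y = g y" "f ` D \<subseteq> D" "x \<in> D"
  shows "orbit_of f x = orbit_of g x"
proof -
  have "(f ^^ n) x = (g ^^ n) x" for n
  proof (induct n)
    case (Suc n)
    have "(f ^^ n) x \<in> D" using fp_in[OF assms(2,3)] .
    then show ?case using Suc assms(1) by simp
  qed simp
  then show ?thesis unfolding orbit_of_def by auto
qed

definition zc :: "('b \<Rightarrow> 'b) \<Rightarrow> 'b set \<Rightarrow> nat" where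
  "zc f D = card {orbit_of f d | d. d \<in> D}"

definition sw :: "'b \<Rightarrow> 'b \<Rightarrow> 'b \<Rightarrow> 'b" where
  "sw x y v = (if v = x then y else if v = y then x else v)"

lemma sw_inv: "sw x y (sw x y v) = v" unfolding sw_def by auto

lemma sw_bij: assumes "x \<in> D" "y \<in> D" shows "bij_betw (sw x y) D D"
proof -
  have "\<forall>v\<in>D. sw x y v \<in> D" using assms unfolding sw_def by simp
  then have "sw x y ` D \<subseteq> D" by blast
  show ?thesis
    by (rule bij_betw_byWitness[where f'="sw x y"]) (simp add: sw_inv, simp add: sw_inv, fact, fact)
qed

lemma comp_sw_bij: "bij_betw \<pi> D D \<Longrightarrow> x \<in> D \<Longrightarrow> y \<in> D \<Longrightarrow> bij_betw (\<pi> \<circ> sw x y) D D"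
  by (rule bij_betw_trans[OF sw_bij])

lemma orb_unchanged:
  assumes "x \<notin> orbit_of \<pi> w" "y \<notin> orbit_of \<pi> w"
  shows "orbit_of (\<pi> \<circ> sw x y) w = orbit_of \<pi> w"
proof -
  have "((\<pi> \<circ> sw x y) ^^ n) w = (\<pi> ^^ n) w" for n
  proof (induct n)
    case (Suc n)
    have "(\<pi> ^^ n) w \<in> orbit_of \<pi> w" by (rule orb_iter)
    then have "sw x y ((\<pi> ^^ n) w) = (\<pi> ^^ n) w" using assms unfolding sw_def by auto
    then show ?case using Suc by simp
  qed simp
  then show ?thesis unfolding orbit_of_def by auto
qed

lemma finite_orbs: "finite D \<Longrightarrow> finite {orbit_of f d | d. d \<in> D}"
  by simp

lemma orbs_mem: "x \<in> D \<Longrightarrow> orbit_of f x \<in> {orbit_of f d | d. d \<in> D}" by blast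

lemma zc_merge:
  assumes bij: "bij_betw \<pi> D D" and fin: "finite D" and xD: "x \<in> D" and yD: "y \<in> D"
    and xy: "x \<noteq> y" and ny: "y \<notin> orbit_of \<pi> x"
  shows "zc (\<pi> \<circ> sw x y) D + 1 = zc \<pi> D"
proof -
  define \<pi>' where "\<pi>' = \<pi> \<circ> sw x y"
  have bij': "bij_betw \<pi>' D D" unfolding \<pi>'_def by (rule comp_sw_bij[OF bij xD yD])
  have fD: "\<pi> ` D \<subseteq> D" using fD_of[OF bij] .
  define Ox where "Ox = orbit_of \<pi> x"
  define Oy where "Oy = orbit_of \<pi> y"
  define X where "X = Ox \<union> Oy"
  have nx: "x \<notin> Oy" unfolding Oy_def using orb_sym[OF bij fin yD] ny by blast
  have \<pi>'x: "\<pi>' x = \<pi> y" unfolding \<pi>'_def sw_def by simp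
  have \<pi>'y: "\<pi>' y = \<pi> x" unfolding \<pi>'_def sw_def using xy by simp
  have \<pi>'v: "\<pi>' v = \<pi> v" if "v \<noteq> x" "v \<noteq> y" for v unfolding \<pi>'_def sw_def using that by simp
  have OxD: "Ox \<subseteq> D" unfolding Ox_def using orb_sub[OF fD xD] .
  have OyD: "Oy \<subseteq> D" unfolding Oy_def using orb_sub[OF fD yD] .
  have gen: "(\<pi> ^^ n) (\<pi> b) \<in> orbit_of \<pi>' a"
    if "\<pi>' a = \<pi> b" "a \<notin> orbit_of \<pi> b" "b \<in> D" "a \<in> {x,y}" "b \<in> {x,y}" "a \<noteq> b" for a b n
  proof (induct n)
    case 0 show ?case using that(1) orb_step[OF orb_self, of \<pi>' a] by simp
  next
    case (Suc n)
    define v where "v = (\<pi> ^^ n) (\<pi> b)"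
    have "v = (\<pi> ^^ Suc n) b" unfolding v_def by (simp add: funpow_Suc_right del: funpow.simps)
    then have vO: "v \<in> orbit_of \<pi> b" using orb_iter by metis
    have "v \<noteq> a" using vO that(2) by blast
    show ?case
    proof (cases "v = b")
      case True
      then have "\<pi> v = \<pi>' a" using that(1) by simp
      then show ?thesis using orb_step[OF orb_self, of \<pi>' a] v_def by simp
    next
      case False
      then have "\<pi> v = \<pi>' v" using \<open>v \<noteq> a\<close> that(4,5,6) \<pi>'v by auto
      then show ?thesis using orb_step[OF Suc[folded v_def]] v_def by simp
    qed
  qed
  have full: "orbit_of \<pi> b \<subseteq> orbit_of \<pi>' a"
    if H: "\<pi>' a = \<pi> b" "a \<notin> orbit_of \<pi> b" "b \<in> D" "a \<in> {x,y}" "b \<in> {x,y}" "a \<noteq> b" for a b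
  proof
    fix w assume "w \<in> orbit_of \<pi> b"
    then obtain n where w: "w = (\<pi> ^^ n) b" unfolding orbit_of_def by blast
    obtain p where p: "p > 0" "(\<pi> ^^ p) b = b" using period[OF bij fin H(3)] by blast
    have np: "n + p = Suc (n + p - 1)" using p(1) by simp
    have "(\<pi> ^^ (n + p - 1)) (\<pi> b) = (\<pi> ^^ (n + p)) b"
      by (subst np) (simp only: funpow_Suc_right comp_apply)
    also have "\<dots> = (\<pi> ^^ n) ((\<pi> ^^ p) b)" by (simp add: funpow_add)
    finally have "w = (\<pi> ^^ (n + p - 1)) (\<pi> b)" using w p by simp
    then show "w \<in> orbit_of \<pi>' a" using gen[OF H] by simp
  qed
  have OyX: "Oy \<subseteq> orbit_of \<pi>' x" unfolding Oy_def
    by (rule full) (use \<pi>'x nx yD xy Oy_def in auto)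
  have OxY: "Ox \<subseteq> orbit_of \<pi>' y" unfolding Ox_def
    by (rule full) (use \<pi>'y ny xD xy in auto)
  have "y \<in> Oy" unfolding Oy_def by (rule orb_self)
  then have yin: "y \<in> orbit_of \<pi>' x" using OyX by (rule subsetD[rotated])
  have eqxy: "orbit_of \<pi>' y = orbit_of \<pi>' x" by (rule orb_eq[OF bij' fin xD yin])
  have Xsub: "orbit_of \<pi>' x \<subseteq> X"
  proof (rule orb_closed)
    have "x \<in> Ox" unfolding Ox_def by (rule orb_self)
    then show "x \<in> X" unfolding X_def by (rule UnI1)
    show "\<forall>v\<in>X. \<pi>' v \<in> X"
    proof
      fix v assume v: "v \<in> X"
      consider "v = x" | "v = y" | "v \<noteq> x" "v \<noteq> y" by blast
      then show "\<pi>' v \<in> X"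
      proof cases
        case 1 then show ?thesis using \<pi>'x orb_step[OF orb_self, of \<pi> y] unfolding X_def Oy_def by auto
      next
        case 2 then show ?thesis using \<pi>'y orb_step[OF orb_self, of \<pi> x] unfolding X_def Ox_def by auto
      next
        case 3
        have "\<pi> v \<in> X" using v orb_step[of v \<pi> x] orb_step[of v \<pi> y] unfolding X_def Ox_def Oy_def by blast
        then show ?thesis using \<pi>'v[OF 3] by simp
      qed
    qed
  qed
  have Xeq: "orbit_of \<pi>' x = X" using Xsub OyX OxY eqxy unfolding X_def by blast
  define Orb where "Orb = {orbit_of \<pi> d | d. d \<in> D}"
  define Orb' where "Orb' = {orbit_of \<pi>' d | d. d \<in> D}"
  have outside: "orbit_of \<pi>' w = orbit_of \<pi> w \<and> orbit_of \<pi> w \<noteq> Ox \<and> orbit_of \<pi> w \<noteq> Oy"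
    if "w \<in> D" "w \<notin> X" for w
  proof -
    have n1: "x \<notin> orbit_of \<pi> w"
    proof
      assume "x \<in> orbit_of \<pi> w"
      then have "w \<in> Ox" unfolding Ox_def using orb_sym[OF bij fin that(1)] by blast
      then show False using that(2) unfolding X_def by blast
    qed
    have n2: "y \<notin> orbit_of \<pi> w"
    proof
      assume "y \<in> orbit_of \<pi> w"
      then have "w \<in> Oy" unfolding Oy_def using orb_sym[OF bij fin that(1)] by blast
      then show False using that(2) unfolding X_def by blast
    qed
    have w: "w \<in> orbit_of \<pi> w" by (rule orb_self)
    have e: "orbit_of \<pi>' w = orbit_of \<pi> w" unfolding \<pi>'_def by (rule orb_unchanged[OF n1 n2])
    have "w \<notin> Ox" "w \<notin> Oy" using that(2) unfolding X_def by blast+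
    then have "orbit_of \<pi> w \<noteq> Ox" "orbit_of \<pi> w \<noteq> Oy" using w by metis+
    then show ?thesis using e by blast
  qed
  have Orb'eq: "Orb' = (Orb - {Ox, Oy}) \<union> {X}"
  proof (intro set_eqI iffI)
    fix Q assume "Q \<in> Orb'"
    then obtain w where w: "w \<in> D" "Q = orbit_of \<pi>' w" unfolding Orb'_def by blast
    show "Q \<in> (Orb - {Ox, Oy}) \<union> {X}"
    proof (cases "w \<in> X")
      case True
      then have "w \<in> orbit_of \<pi>' x" using Xeq by simp
      then have "orbit_of \<pi>' w = orbit_of \<pi>' x" by (rule orb_eq[OF bij' fin xD])
      then show ?thesis using w Xeq by simp
    next
      case False
      then show ?thesis using outside[OF w(1) False] w unfolding Orb_def by auto
    qed
  next
    fix Q assume "Q \<in> (Orb - {Ox, Oy}) \<union> {X}"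
    then consider "Q = X" | "Q \<in> Orb" "Q \<noteq> Ox" "Q \<noteq> Oy" by blast
    then show "Q \<in> Orb'"
    proof cases
      case 1 then show ?thesis using Xeq xD unfolding Orb'_def by blast
    next
      case 2
      note Qc = 2
      then obtain w where w: "w \<in> D" "Q = orbit_of \<pi> w" unfolding Orb_def by blast
      have "w \<notin> X"
      proof
        assume "w \<in> X"
        then consider "w \<in> Ox" | "w \<in> Oy" unfolding X_def by blast
        then show False
        proof cases
          case 1 then have "orbit_of \<pi> w = Ox" unfolding Ox_def by (rule orb_eq[OF bij fin xD])
          then show False using Qc w by simp
        next
          case 2 then have "orbit_of \<pi> w = Oy" unfolding Oy_def by (rule orb_eq[OF bij fin yD])
          then show False using Qc w by simp
        qed
      qed
      then show ?thesis using outside[OF w(1)] w unfolding Orb'_def by auto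
    qed
  qed
  have finOrb: "finite Orb" unfolding Orb_def using fin by simp
  have OxOrb: "Ox \<in> Orb" and OyOrb: "Oy \<in> Orb" unfolding Orb_def Ox_def Oy_def using xD yD by blast+
  have OxOy: "Ox \<noteq> Oy" using nx orb_self[of x \<pi>] unfolding Ox_def by blast
  have Xnot: "X \<notin> Orb - {Ox, Oy}"
  proof
    assume "X \<in> Orb - {Ox, Oy}"
    then obtain w where w: "w \<in> D" "X = orbit_of \<pi> w" "X \<noteq> Ox" unfolding Orb_def by blast
    have "x \<in> orbit_of \<pi> w" using w(2) orb_self[of x \<pi>] unfolding X_def Ox_def by blast
    then have "w \<in> Ox" unfolding Ox_def using orb_sym[OF bij fin w(1)] by blast
    then have "orbit_of \<pi> w = Ox" unfolding Ox_def by (rule orb_eq[OF bij fin xD])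
    then show False using w by simp
  qed
  have "card Orb' = card (Orb - {Ox, Oy}) + 1" unfolding Orb'eq using Xnot finOrb by simp
  moreover have "card (Orb - {Ox, Oy}) + 2 = card Orb"
  proof -
    have "card {Ox, Oy} \<le> card Orb" using finOrb OxOrb OyOrb by (intro card_mono) auto
    then show ?thesis using finOrb OxOrb OyOrb OxOy by (simp add: card_Diff_subset)
  qed
  ultimately show ?thesis unfolding zc_def \<pi>'_def[symmetric] Orb_def[symmetric] Orb'_def[symmetric] by simp
qed

lemma zc_split:
  assumes bij: "bij_betw \<pi> D D" and fin: "finite D" and xD: "x \<in> D" and yD: "y \<in> D"
    and xy: "x \<noteq> y" and yin: "y \<in> orbit_of \<pi> x"
  shows "zc (\<pi> \<circ> sw x y) D = zc \<pi> D + 1"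
proof -
  define \<pi>' where "\<pi>' = \<pi> \<circ> sw x y"
  have bij': "bij_betw \<pi>' D D" unfolding \<pi>'_def by (rule comp_sw_bij[OF bij xD yD])
  have fD: "\<pi> ` D \<subseteq> D" using fD_of[OF bij] .
  define Q0 where "Q0 = orbit_of \<pi> x"
  have Oy: "orbit_of \<pi> y = Q0" unfolding Q0_def by (rule orb_eq[OF bij fin xD yin])
  have \<pi>'x: "\<pi>' x = \<pi> y" unfolding \<pi>'_def sw_def by simp
  have \<pi>'y: "\<pi>' y = \<pi> x" unfolding \<pi>'_def sw_def using xy by simp
  have \<pi>'v: "\<pi>' v = \<pi> v" if "v \<noteq> x" "v \<noteq> y" for v unfolding \<pi>'_def sw_def using that by simp
  define Px where "Px = orbit_of \<pi>' x"
  define Py where "Py = orbit_of \<pi>' y"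
  have xPx: "x \<in> Px" unfolding Px_def by (rule orb_self)
  have yPy: "y \<in> Py" unfolding Py_def by (rule orb_self)
  have cover: "(\<pi> ^^ n) x \<in> Px \<union> Py" for n
  proof (induct n)
    case 0 then show ?case using xPx by simp
  next
    case (Suc n)
    define v where "v = (\<pi> ^^ n) x"
    have vin: "v \<in> Px \<union> Py" using Suc v_def by simp
    consider "v = x" | "v = y" | "v \<noteq> x" "v \<noteq> y" by blast
    then show ?case
    proof cases
      case 1
      have "\<pi>' y \<in> Py" unfolding Py_def by (rule orb_step[OF orb_self])
      then show ?thesis using 1 \<pi>'y v_def by simp
    next
      case 2
      have "\<pi>' x \<in> Px" unfolding Px_def by (rule orb_step[OF orb_self])
      then show ?thesis using 2 \<pi>'x v_def by simp
    next
      case 3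
      have "\<pi>' v \<in> Px \<union> Py" using vin orb_step[of v \<pi>' x] orb_step[of v \<pi>' y] unfolding Px_def Py_def by blast
      then show ?thesis using \<pi>'v[OF 3] v_def by simp
    qed
  qed
  have Q0cov: "Q0 \<subseteq> Px \<union> Py"
  proof
    fix w assume "w \<in> Q0"
    then obtain n where "w = (\<pi> ^^ n) x" unfolding Q0_def orbit_of_def by blast
    then show "w \<in> Px \<union> Py" using cover by simp
  qed
  have xQ: "x \<in> Q0" unfolding Q0_def by (rule orb_self)
  have yQ: "y \<in> Q0" using yin unfolding Q0_def .
  have clos: "\<forall>v\<in>Q0. \<pi>' v \<in> Q0"
  proof
    fix v assume v: "v \<in> Q0"
    consider "v = x" | "v = y" | "v \<noteq> x" "v \<noteq> y" by blast
    then show "\<pi>' v \<in> Q0"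
    proof cases
      case 1 then show ?thesis using \<pi>'x orb_step[OF yin, folded Q0_def] by simp
    next
      case 2 then show ?thesis using \<pi>'y orb_step[OF orb_self[of x \<pi>], folded Q0_def] by simp
    next
      case 3 then show ?thesis using \<pi>'v[OF 3] orb_step[OF v[unfolded Q0_def], folded Q0_def] by simp
    qed
  qed
  have PxQ: "Px \<subseteq> Q0" unfolding Px_def by (rule orb_closed[OF xQ clos])
  have PyQ: "Py \<subseteq> Q0" unfolding Py_def by (rule orb_closed[OF yQ clos])
  define p where "p = (LEAST p. 0 < p \<and> (\<pi> ^^ p) x = x)"
  have pex: "\<exists>p. 0 < p \<and> (\<pi> ^^ p) x = x" using period[OF bij fin xD] by blast
  have p: "0 < p" "(\<pi> ^^ p) x = x" using LeastI_ex[OF pex] unfolding p_def by blast+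
  have pmin: "(\<pi> ^^ m) x \<noteq> x" if "0 < m" "m < p" for m
    using not_less_Least[of m "\<lambda>p. 0 < p \<and> (\<pi> ^^ p) x = x"] that unfolding p_def by blast
  have inj: "inj_on (\<lambda>k. (\<pi> ^^ k) x) {0..<p}" by (rule inj_on_funpow_least[OF p(2) pmin])
  obtain s0 where s0: "y = (\<pi> ^^ s0) x" using yin unfolding orbit_of_def by blast
  define s where "s = s0 mod p"
  have ys: "y = (\<pi> ^^ s) x" unfolding s_def using s0 funpow_mod_eq[OF p(2)] by simp
  have sp: "s < p" unfolding s_def using p(1) by simp
  have s0': "s \<noteq> 0" using ys xy by (metis funpow_0)
  have injE: "i = j" if "(\<pi> ^^ i) x = (\<pi> ^^ j) x" "i < p" "j < p" for i j
    using inj that unfolding inj_on_def by simp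
  define C where "C = {(\<pi> ^^ j) x | j. s < j \<and> j \<le> p}"
  have xC: "x \<in> C" unfolding C_def using sp p(2) by (auto intro!: exI[of _ p])
  have closC: "\<forall>v\<in>C. \<pi>' v \<in> C"
  proof
    fix v assume "v \<in> C"
    then obtain j where j: "v = (\<pi> ^^ j) x" "s < j" "j \<le> p" unfolding C_def by blast
    show "\<pi>' v \<in> C"
    proof (cases "j = p")
      case True
      then have "v = x" using j p(2) by simp
      then have "\<pi>' v = (\<pi> ^^ Suc s) x" using \<pi>'x ys by simp
      then show ?thesis unfolding C_def using sp by (auto intro!: exI[of _ "Suc s"])
    next
      case False
      then have jp: "j < p" using j by simp
      have "v \<noteq> x"
      proof
        assume "v = x"
        then have "(\<pi> ^^ j) x = (\<pi> ^^ 0) x" using j by simp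
        then have "j = 0" using injE jp p(1) by blast
        then show False using j by simp
      qed
      moreover have "v \<noteq> y"
      proof
        assume "v = y"
        then have "j = s" using injE jp sp j ys by metis
        then show False using j by simp
      qed
      ultimately have "\<pi>' v = (\<pi> ^^ Suc j) x" using \<pi>'v j by simp
      then show ?thesis unfolding C_def using jp j by (auto intro!: exI[of _ "Suc j"])
    qed
  qed
  have PxC: "Px \<subseteq> C" unfolding Px_def by (rule orb_closed[OF xC closC])
  have yC: "y \<notin> C"
  proof
    assume "y \<in> C"
    then obtain j where j: "y = (\<pi> ^^ j) x" "s < j" "j \<le> p" unfolding C_def by blast
    show False
    proof (cases "j = p")
      case True then show False using j p(2) xy by simp
    next
      case False then have "j = s" using injE j sp ys by (metis le_neq_implies_less)
      then show False using j by simp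
    qed
  qed
  have yPx: "y \<notin> Px" using PxC yC by blast
  have PxPy: "Px \<noteq> Py" using yPx yPy by blast
  define Orb where "Orb = {orbit_of \<pi> d | d. d \<in> D}"
  define Orb' where "Orb' = {orbit_of \<pi>' d | d. d \<in> D}"
  have QD: "Q0 \<subseteq> D" unfolding Q0_def by (rule orb_sub[OF fD xD])
  have Orb'eq: "Orb' = (Orb - {Q0}) \<union> {Px, Py}"
  proof (intro set_eqI iffI)
    fix Q assume "Q \<in> Orb'"
    then obtain w where w: "w \<in> D" "Q = orbit_of \<pi>' w" unfolding Orb'_def by blast
    show "Q \<in> (Orb - {Q0}) \<union> {Px, Py}"
    proof (cases "w \<in> Q0")
      case True
      then consider "w \<in> Px" | "w \<in> Py" using Q0cov by blast
      then show ?thesis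
      proof cases
        case 1 then have "orbit_of \<pi>' w = Px" unfolding Px_def by (rule orb_eq[OF bij' fin xD])
        then show ?thesis using w by simp
      next
        case 2 then have "orbit_of \<pi>' w = Py" unfolding Py_def by (rule orb_eq[OF bij' fin yD])
        then show ?thesis using w by simp
      qed
    next
      case False
      have n1: "x \<notin> orbit_of \<pi> w"
      proof
        assume "x \<in> orbit_of \<pi> w"
        then have "w \<in> Q0" unfolding Q0_def using orb_sym[OF bij fin w(1)] by blast
        then show False using False by simp
      qed
      have n2: "y \<notin> orbit_of \<pi> w"
      proof
        assume "y \<in> orbit_of \<pi> w"
        then have "w \<in> orbit_of \<pi> y" using orb_sym[OF bij fin w(1)] by blast
        then show False using False Oy by simp
      qed
      have e: "orbit_of \<pi>' w = orbit_of \<pi> w" unfolding \<pi>'_def by (rule orb_unchanged[OF n1 n2])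
      have "orbit_of \<pi> w \<noteq> Q0" using False orb_self[of w \<pi>] by metis
      then show ?thesis using e w unfolding Orb_def by blast
    qed
  next
    fix Q assume "Q \<in> (Orb - {Q0}) \<union> {Px, Py}"
    then consider "Q = Px" | "Q = Py" | "Q \<in> Orb" "Q \<noteq> Q0" by blast
    then show "Q \<in> Orb'"
    proof cases
      case 1 then show ?thesis unfolding Orb'_def Px_def using xD by blast
    next
      case 2 then show ?thesis unfolding Orb'_def Py_def using yD by blast
    next
      case 3
      note Qc = 3
      then obtain w where w: "w \<in> D" "Q = orbit_of \<pi> w" unfolding Orb_def by blast
      have n1: "x \<notin> orbit_of \<pi> w"
      proof
        assume "x \<in> orbit_of \<pi> w"
        then have "w \<in> Q0" unfolding Q0_def using orb_sym[OF bij fin w(1)] by blast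
        then have "orbit_of \<pi> w = Q0" unfolding Q0_def by (rule orb_eq[OF bij fin xD])
        then show False using Qc w by simp
      qed
      have n2: "y \<notin> orbit_of \<pi> w"
      proof
        assume "y \<in> orbit_of \<pi> w"
        then have "w \<in> orbit_of \<pi> y" using orb_sym[OF bij fin w(1)] by blast
        then have "orbit_of \<pi> w = orbit_of \<pi> y" by (rule orb_eq[OF bij fin yD])
        then show False using Qc w Oy by simp
      qed
      have e: "orbit_of \<pi>' w = orbit_of \<pi> w" unfolding \<pi>'_def by (rule orb_unchanged[OF n1 n2])
      then show ?thesis using w unfolding Orb'_def by blast
    qed
  qed
  have finOrb: "finite Orb" unfolding Orb_def using fin by simp
  have QOrb: "Q0 \<in> Orb" unfolding Orb_def Q0_def using xD by blast
  have notin: "P \<notin> Orb - {Q0}" if "z \<in> P" "z \<in> Q0" for P z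
  proof
    assume "P \<in> Orb - {Q0}"
    then obtain w where w: "w \<in> D" "P = orbit_of \<pi> w" "P \<noteq> Q0" unfolding Orb_def by blast
    have "z \<in> orbit_of \<pi> w" using w that by simp
    then have "orbit_of \<pi> w = Q0" using orb_eq2[OF bij fin xD _ _ w(1), of z] that(2) unfolding Q0_def by simp
    then show False using w by simp
  qed
  have "card Orb' = card (Orb - {Q0}) + 2"
    unfolding Orb'eq using notin[OF xPx xQ] notin[OF yPy yQ] PxPy finOrb by simp
  moreover have "card (Orb - {Q0}) + 1 = card Orb" using finOrb QOrb
    by (metis card_Diff1_less card_Diff_singleton Suc_eq_plus1 Suc_pred' zero_less_diff less_nat_zero_code card_gt_0_iff empty_iff)
  ultimately show ?thesis unfolding zc_def \<pi>'_def[symmetric] Orb_def[symmetric] Orb'_def[symmetric] by simp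
qed

definition flipS :: "(nat \<times> 'a) set \<Rightarrow> (nat \<times> 'a) \<times> bool \<Rightarrow> (nat \<times> 'a) \<times> bool" where
  "flipS S d = (if fst d \<in> S then flip d else d)"

definition adjS :: "'a dfa \<Rightarrow> (nat \<times> 'a) set \<Rightarrow> (nat \<times> nat) set" where
  "adjS A S = {(u, v). \<exists>e\<in>S. joins A e u v}"

definition kap :: "'a dfa \<Rightarrow> (nat \<times> 'a) set \<Rightarrow> nat" where
  "kap A S = card (states A // ((adjS A S)\<^sup>* \<inter> states A \<times> states A))"

definition Qv :: "'a dfa \<Rightarrow> ((nat \<times> 'a) \<times> bool \<Rightarrow> (nat \<times> 'a) \<times> bool) \<Rightarrow> (nat \<times> 'a) set \<Rightarrow> int" where
  "Qv A \<sigma> S = int (zc (\<sigma> \<circ> flipS S) (darts A)) - 2 * int (kap A S)"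

lemma flip_flip[simp]: "flip (flip d) = d" unfolding flip_def by simp
lemma fst_flip[simp]: "fst (flip d) = fst d" unfolding flip_def by simp
lemma snd_flip[simp]: "snd (flip d) = (\<not> snd d)" unfolding flip_def by simp

lemma darts_iff: "d \<in> darts A \<longleftrightarrow> fst (fst d) \<in> states A"
  unfolding darts_def edges_def by (cases d) (cases "fst d", auto)

lemma flip_darts[simp]: "flip d \<in> darts A \<longleftrightarrow> d \<in> darts A"
  unfolding darts_iff by simp

lemma finite_darts: "is_dfa A \<Longrightarrow> finite (darts (A :: ('a::finite) dfa))"
  unfolding darts_def edges_def is_dfa_def by simp

lemma finite_edges: "is_dfa A \<Longrightarrow> finite (edges (A :: ('a::finite) dfa))"
  unfolding edges_def is_dfa_def by simp

lemma card_edges: "card (edges (A :: ('a::finite) dfa)) = card (states A) * CARD('a)"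
  unfolding edges_def by (simp add: card_cartesian_product)

lemma joins_dart: "joins A (fst d) (dart_vertex A d) (dart_vertex A (flip d))"
  unfolding joins_def dart_vertex_def flip_def by auto

lemma dart_vertex_in: "is_dfa A \<Longrightarrow> d \<in> darts A \<Longrightarrow> dart_vertex A d \<in> states A"
  unfolding is_dfa_def dart_vertex_def darts_iff by auto

lemma flipS_bij: "bij_betw (flipS S) (darts A) (darts A)"
proof -
  have inv: "flipS S (flipS S d) = d" for d unfolding flipS_def by auto
  have "\<forall>d\<in>darts A. flipS S d \<in> darts A" unfolding flipS_def by simp
  then have "flipS S ` darts A \<subseteq> darts A" by blast
  show ?thesis
    by (rule bij_betw_byWitness[where f'="flipS S"]) (simp add: inv, simp add: inv, fact, fact)
qed

lemma rot_bij: "rotation_system A \<sigma> \<Longrightarrow> bij_betw \<sigma> (darts A) (darts A)"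
  unfolding rotation_system_def by simp

lemma rot_vertex: assumes "rotation_system A \<sigma>" "d \<in> darts A"
  shows "\<sigma> d \<in> darts A \<and> dart_vertex A (\<sigma> d) = dart_vertex A d"
proof -
  have "\<sigma> d \<in> orbit_of \<sigma> d" by (rule orb_step[OF orb_self])
  then show ?thesis using assms unfolding rotation_system_def by blast
qed

lemma rot_orbit: assumes "rotation_system A \<sigma>" "d \<in> darts A"
  shows "orbit_of \<sigma> d = {d' \<in> darts A. dart_vertex A d' = dart_vertex A d}"
  using assms unfolding rotation_system_def by blast

lemma piS_bij: "rotation_system A \<sigma> \<Longrightarrow> bij_betw (\<sigma> \<circ> flipS S) (darts A) (darts A)"
  by (rule bij_betw_trans[OF flipS_bij rot_bij])

lemma flipS_insert: assumes "e \<notin> S"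
  shows "flipS (insert e S) = flipS S \<circ> sw (e, True) (e, False)"
proof
  fix d :: "(nat \<times> 'a) \<times> bool"
  show "flipS (insert e S) d = (flipS S \<circ> sw (e, True) (e, False)) d"
  proof (cases "fst d = e")
    case True
    then have "d = (e, True) \<or> d = (e, False)" by (cases d) (cases "snd d", auto)
    then show ?thesis using assms unfolding flipS_def sw_def flip_def by auto
  next
    case False
    then have "d \<noteq> (e, True)" "d \<noteq> (e, False)" by auto
    then show ?thesis using False unfolding flipS_def sw_def by simp
  qed
qed

lemma adjS_sym: "sym (adjS A S)"
  unfolding adjS_def joins_def sym_def by blast

lemma adjS_insert: "adjS A (insert e S) = adjS A S \<union> {(fst e, trans A (fst e) (snd e)), (trans A (fst e) (snd e), fst e)}"
  unfolding adjS_def joins_def by auto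

lemma vtx_sw: "dart_vertex A (e, True) = fst e" "dart_vertex A (e, False) = trans A (fst e) (snd e)"
  unfolding dart_vertex_def by auto

lemma piS_conn:
  assumes rot: "rotation_system A \<sigma>" and d: "d \<in> darts A"
  shows "(dart_vertex A d, dart_vertex A ((\<sigma> \<circ> flipS S) d)) \<in> (adjS A S)\<^sup>*"
proof -
  have fd: "flipS S d \<in> darts A" using d unfolding flipS_def by simp
  have e1: "dart_vertex A ((\<sigma> \<circ> flipS S) d) = dart_vertex A (flipS S d)"
    using rot_vertex[OF rot fd] by simp
  have "(dart_vertex A d, dart_vertex A (flipS S d)) \<in> (adjS A S)\<^sup>*"
  proof (cases "fst d \<in> S")
    case True
    then have "(dart_vertex A d, dart_vertex A (flip d)) \<in> adjS A S"
      unfolding adjS_def using joins_dart[of A d] by blast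
    then show ?thesis unfolding flipS_def using True by auto
  next
    case False then show ?thesis unfolding flipS_def by simp
  qed
  then show ?thesis using e1 by simp
qed

lemma orbit_conn:
  assumes rot: "rotation_system A \<sigma>" and d: "d \<in> darts A" and w: "w \<in> orbit_of (\<sigma> \<circ> flipS S) d"
  shows "(dart_vertex A d, dart_vertex A w) \<in> (adjS A S)\<^sup>*"
proof -
  define f where "f = \<sigma> \<circ> flipS S"
  have fD: "f ` darts A \<subseteq> darts A" unfolding f_def using fD_of[OF piS_bij[OF rot]] .
  have st: "(dart_vertex A x, dart_vertex A (f x)) \<in> (adjS A S)\<^sup>*" if "x \<in> darts A" for x
    unfolding f_def by (rule piS_conn[OF rot that])
  have "(dart_vertex A d, dart_vertex A ((f ^^ n) d)) \<in> (adjS A S)\<^sup>*" for n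
  proof (induct n)
    case (Suc n)
    have "(f ^^ n) d \<in> darts A" by (rule fp_in[OF fD d])
    from rtrancl_trans[OF Suc st[OF this]] show ?case by simp
  qed simp
  then show ?thesis using w unfolding orbit_of_def f_def[symmetric] by blast
qed

lemma equiv_rt: assumes "sym r" shows "equiv V (r\<^sup>* \<inter> V \<times> V)"
proof -
  have s: "sym (r\<^sup>*)" by (rule sym_rtrancl[OF assms])
  show ?thesis unfolding equiv_def refl_on_def sym_def Relation.trans_def
    using s unfolding sym_def by (auto intro: rtrancl_trans)
qed

lemma symD': "sym r \<Longrightarrow> (a, b) \<in> r\<^sup>* \<Longrightarrow> (b, a) \<in> r\<^sup>*"
  using sym_rtrancl unfolding sym_def by blast

lemma rt_insert_cases:
  assumes sym: "sym r" and ab: "(a, b) \<in> (r \<union> {(u, v), (v, u)})\<^sup>*"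
  shows "(a, b) \<in> r\<^sup>* \<or> ((a, u) \<in> r\<^sup>* \<and> (v, b) \<in> r\<^sup>*) \<or> ((a, v) \<in> r\<^sup>* \<and> (u, b) \<in> r\<^sup>*)"
  using ab
proof (induct rule: rtrancl_induct)
  case base then show ?case by simp
next
  case (step b c)
  have sy: "\<And>x y. (x, y) \<in> r\<^sup>* \<Longrightarrow> (y, x) \<in> r\<^sup>*" using symD'[OF sym] by blast
  from step(2) consider "(b, c) \<in> r" | "b = u" "c = v" | "b = v" "c = u" by blast
  then show ?case
  proof cases
    case 1
    then have bc: "(b, c) \<in> r\<^sup>*" by simp
    from step(3) show ?thesis using rtrancl_trans[OF _ bc] by blast
  next
    case 2
    from step(3) show ?thesis
    proof (elim disjE conjE)
      assume "(a, b) \<in> r\<^sup>*" then show ?thesis using 2 by simp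
    next
      assume h: "(a, u) \<in> r\<^sup>*" "(v, b) \<in> r\<^sup>*"
      then have "(u, v) \<in> r\<^sup>*" using 2 sy by simp
      then show ?thesis using h(1) 2 rtrancl_trans by metis
    next
      assume h: "(a, v) \<in> r\<^sup>*" "(u, b) \<in> r\<^sup>*"
      then show ?thesis using 2 by simp
    qed
  next
    case 3
    from step(3) show ?thesis
    proof (elim disjE conjE)
      assume "(a, b) \<in> r\<^sup>*" then show ?thesis using 3 by simp
    next
      assume h: "(a, u) \<in> r\<^sup>*" "(v, b) \<in> r\<^sup>*"
      then show ?thesis using 3 by simp
    next
      assume h: "(a, v) \<in> r\<^sup>*" "(u, b) \<in> r\<^sup>*"
      then have "(v, u) \<in> r\<^sup>*" using 3 sy by simp
      then show ?thesis using h(1) 3 rtrancl_trans by metis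
    qed
  qed
qed

lemma card_quot_insert:
  assumes sym: "sym r" and fin: "finite V" and vV: "v \<in> V"
  shows "card (V // (r\<^sup>* \<inter> V \<times> V)) \<le> card (V // ((r \<union> {(u, v), (v, u)})\<^sup>* \<inter> V \<times> V)) + 1"
proof -
  define r' where "r' = r \<union> {(u, v), (v, u)}"
  have sym': "sym r'" using sym unfolding r'_def sym_def by blast
  define R where "R = r\<^sup>* \<inter> V \<times> V"
  define R' where "R' = r'\<^sup>* \<inter> V \<times> V"
  have eqR: "equiv V R" unfolding R_def by (rule equiv_rt[OF sym])
  have eqR': "equiv V R'" unfolding R'_def by (rule equiv_rt[OF sym'])
  have RR': "R \<subseteq> R'" unfolding R_def R'_def r'_def by (auto intro: rtrancl_mono[THEN subsetD, rotated])
  define g where "g = (\<lambda>C. R' `` C)"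
  have gcl: "g (R `` {a}) = R' `` {a}" if "a \<in> V" for a
  proof
    show "g (R `` {a}) \<subseteq> R' `` {a}"
    proof
      fix c assume "c \<in> g (R `` {a})"
      then obtain b where b: "(a, b) \<in> R" "(b, c) \<in> R'" unfolding g_def by blast
      then have "(a, b) \<in> R'" using RR' by blast
      then show "c \<in> R' `` {a}" using b(2) eqR' unfolding equiv_def Relation.trans_def by blast
    qed
    show "R' `` {a} \<subseteq> g (R `` {a})"
      unfolding g_def using equiv_class_self[OF eqR that] by blast
  qed
  define Cv where "Cv = R `` {v}"
  have inj: "inj_on g (V // R - {Cv})"
  proof (rule inj_onI)
    fix C1 C2 assume C1: "C1 \<in> V // R - {Cv}" and C2: "C2 \<in> V // R - {Cv}" and eq: "g C1 = g C2"
    obtain a where a: "a \<in> V" "C1 = R `` {a}" using C1 by (auto elim: quotientE)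
    obtain b where b: "b \<in> V" "C2 = R `` {b}" using C2 by (auto elim: quotientE)
    have "R' `` {a} = R' `` {b}" using eq gcl a b by simp
    then have "(a, b) \<in> R'" using eq_equiv_class_iff[OF eqR' a(1) b(1)] by simp
    then have "(a, b) \<in> r'\<^sup>*" unfolding R'_def by simp
    then have cs: "(a, b) \<in> r\<^sup>* \<or> ((a, u) \<in> r\<^sup>* \<and> (v, b) \<in> r\<^sup>*) \<or> ((a, v) \<in> r\<^sup>* \<and> (u, b) \<in> r\<^sup>*)"
      unfolding r'_def by (rule rt_insert_cases[OF sym])
    have nva: "(v, a) \<notin> R"
    proof
      assume "(v, a) \<in> R"
      then have "R `` {v} = R `` {a}" by (rule equiv_class_eq[OF eqR])
      then show False using C1 a unfolding Cv_def by simp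
    qed
    have nvb: "(v, b) \<notin> R"
    proof
      assume "(v, b) \<in> R"
      then have "R `` {v} = R `` {b}" by (rule equiv_class_eq[OF eqR])
      then show False using C2 b unfolding Cv_def by simp
    qed
    have sy: "(x, y) \<in> r\<^sup>* \<Longrightarrow> (y, x) \<in> r\<^sup>*" for x y using symD'[OF sym] by blast
    from cs have "(a, b) \<in> R"
    proof (elim disjE conjE)
      assume "(a, b) \<in> r\<^sup>*" then show ?thesis unfolding R_def using a b by simp
    next
      assume "(v, b) \<in> r\<^sup>*" then have False using nvb vV b unfolding R_def by simp
      then show ?thesis ..
    next
      assume "(a, v) \<in> r\<^sup>*" then have False using nva vV a sy unfolding R_def by simp
      then show ?thesis ..
    qed
    then show "C1 = C2" using a b equiv_class_eq[OF eqR] by simp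
  qed
  have img: "g ` (V // R - {Cv}) \<subseteq> V // R'"
  proof
    fix C assume "C \<in> g ` (V // R - {Cv})"
    then obtain C0 where "C0 \<in> V // R" "C = g C0" by blast
    then obtain a where "a \<in> V" "C = g (R `` {a})" by (auto elim: quotientE)
    then show "C \<in> V // R'" using gcl quotientI by metis
  qed
  have finR': "finite (V // R')" unfolding R'_def by (rule finite_quotient[OF fin]) blast
  have finR: "finite (V // R)" unfolding R_def by (rule finite_quotient[OF fin]) blast
  have "card (V // R - {Cv}) \<le> card (V // R')"
    using card_inj_on_le[OF inj img finR'] .
  moreover have "card (V // R) \<le> card (V // R - {Cv}) + 1"
    using finR by (metis card_Diff1_le card_Diff_singleton_if le_refl add.commute le_add_diff_inverse card_Diff1_less
        Suc_eq_plus1 Suc_pred' less_imp_le_nat card_gt_0_iff trans_le_add2 not_less empty_iff)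
  ultimately show ?thesis unfolding R_def R'_def r'_def by simp
qed

lemma Qv_step:
  fixes A :: "('a::finite) dfa"
  assumes dfa: "is_dfa A" and rot: "rotation_system A \<sigma>" and e: "e \<in> edges A" and eS: "e \<notin> S"
  shows "Qv A \<sigma> (insert e S) \<le> Qv A \<sigma> S + 1 \<and> even (Qv A \<sigma> S + 1 - Qv A \<sigma> (insert e S))"
proof -
  define D where "D = darts A"
  define \<pi> where "\<pi> = \<sigma> \<circ> flipS S"
  define x where "x = (e, True)"
  define y where "y = (e, False)"
  have xD: "x \<in> D" and yD: "y \<in> D" using e unfolding D_def x_def y_def darts_def by auto
  have xy: "x \<noteq> y" unfolding x_def y_def by simp
  have comp: "\<sigma> \<circ> flipS (insert e S) = \<pi> \<circ> sw x y"
    unfolding \<pi>_def x_def y_def flipS_insert[OF eS] by (simp add: comp_assoc)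
  have bij: "bij_betw \<pi> D D" unfolding \<pi>_def D_def by (rule piS_bij[OF rot])
  have fin: "finite D" unfolding D_def by (rule finite_darts[OF dfa])
  define u where "u = fst e"
  define v where "v = trans A (fst e) (snd e)"
  have vx: "dart_vertex A x = u" "dart_vertex A y = v" unfolding x_def y_def u_def v_def by (simp_all add: vtx_sw)
  have vV: "v \<in> states A" using dfa e unfolding v_def is_dfa_def edges_def by auto
  have adj': "adjS A (insert e S) = adjS A S \<union> {(u, v), (v, u)}"
    unfolding u_def v_def by (rule adjS_insert)
  have finV: "finite (states A)" using dfa unfolding is_dfa_def by simp
  have QvS: "Qv A \<sigma> S = int (zc \<pi> D) - 2 * int (kap A S)" unfolding Qv_def \<pi>_def D_def ..
  have QvS': "Qv A \<sigma> (insert e S) = int (zc (\<pi> \<circ> sw x y) D) - 2 * int (kap A (insert e S))"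
    unfolding Qv_def D_def comp ..
  show ?thesis
  proof (cases "y \<in> orbit_of \<pi> x")
    case True
    have z: "zc (\<pi> \<circ> sw x y) D = zc \<pi> D + 1" by (rule zc_split[OF bij fin xD yD xy True])
    have "(u, v) \<in> (adjS A S)\<^sup>*" using orbit_conn[OF rot xD[unfolded D_def] True[unfolded \<pi>_def]] vx by simp
    moreover have "(v, u) \<in> (adjS A S)\<^sup>*" using calculation symD'[OF adjS_sym] by blast
    ultimately have "(adjS A (insert e S))\<^sup>* = (adjS A S)\<^sup>*" unfolding adj'
      by (intro rtrancl_subset) auto
    then have "kap A (insert e S) = kap A S" unfolding kap_def by simp
    then show ?thesis unfolding QvS QvS' z by simp
  next
    case False
    have z: "zc (\<pi> \<circ> sw x y) D + 1 = zc \<pi> D" by (rule zc_merge[OF bij fin xD yD xy False])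
    have "kap A S \<le> kap A (insert e S) + 1"
      unfolding kap_def adj' by (rule card_quot_insert[OF adjS_sym finV vV])
    moreover have "zc \<pi> D = zc (\<pi> \<circ> sw x y) D + 1" using z by simp
    ultimately show ?thesis unfolding QvS QvS' by simp
  qed
qed

lemma Qv_acc:
  fixes A :: "('a::finite) dfa"
  assumes dfa: "is_dfa A" and rot: "rotation_system A \<sigma>"
  shows "finite X \<Longrightarrow> X \<subseteq> edges A \<Longrightarrow> X \<inter> S = {} \<Longrightarrow>
    Qv A \<sigma> (S \<union> X) \<le> Qv A \<sigma> S + int (card X) \<and> even (Qv A \<sigma> S + int (card X) - Qv A \<sigma> (S \<union> X))"
proof (induct X rule: finite_induct)
  case empty then show ?case by simp
next
  case (insert e X)
  have IH: "Qv A \<sigma> (S \<union> X) \<le> Qv A \<sigma> S + int (card X) \<and> even (Qv A \<sigma> S + int (card X) - Qv A \<sigma> (S \<union> X))"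
    using insert by auto
  have e: "e \<in> edges A" "e \<notin> S \<union> X" using insert by auto
  have st: "Qv A \<sigma> (insert e (S \<union> X)) \<le> Qv A \<sigma> (S \<union> X) + 1 \<and>
     even (Qv A \<sigma> (S \<union> X) + 1 - Qv A \<sigma> (insert e (S \<union> X)))"
    by (rule Qv_step[OF dfa rot e])
  have ci: "int (card (insert e X)) = int (card X) + 1" using insert by simp
  have eq: "S \<union> insert e X = insert e (S \<union> X)" by blast
  have e1: "even (Qv A \<sigma> S + int (card X) - Qv A \<sigma> (S \<union> X))" using IH by (rule conjunct2)
  have e2: "even (Qv A \<sigma> (S \<union> X) + 1 - Qv A \<sigma> (insert e (S \<union> X)))" using st by (rule conjunct2)
  obtain k1 where k1: "Qv A \<sigma> S + int (card X) - Qv A \<sigma> (S \<union> X) = 2 * k1" using e1 by (blast elim: evenE)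
  obtain k2 where k2: "Qv A \<sigma> (S \<union> X) + 1 - Qv A \<sigma> (insert e (S \<union> X)) = 2 * k2" using e2 by (blast elim: evenE)
  have "Qv A \<sigma> S + (int (card X) + 1) - Qv A \<sigma> (insert e (S \<union> X)) = 2 * (k1 + k2)" using k1 k2 by simp
  then have ev: "even (Qv A \<sigma> S + (int (card X) + 1) - Qv A \<sigma> (insert e (S \<union> X)))" by simp
  show ?case unfolding eq ci using IH st ev by simp
qed

lemma flipS_empty: "flipS {} = id" unfolding flipS_def by auto

lemma zc_sigma:
  fixes A :: "('a::finite) dfa"
  assumes dfa: "is_dfa A" and rot: "rotation_system A \<sigma>"
  shows "zc \<sigma> (darts A) = card (states A)"
proof -
  define a0 :: 'a where "a0 = undefined"
  define cl where "cl = (\<lambda>v. {d' \<in> darts A. dart_vertex A d' = v})"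
  have "{orbit_of \<sigma> d | d. d \<in> darts A} = cl ` states A"
  proof (intro set_eqI iffI)
    fix Q assume "Q \<in> {orbit_of \<sigma> d | d. d \<in> darts A}"
    then obtain d where d: "d \<in> darts A" "Q = orbit_of \<sigma> d" by blast
    then show "Q \<in> cl ` states A" using rot_orbit[OF rot d(1)] dart_vertex_in[OF dfa d(1)] unfolding cl_def by blast
  next
    fix Q assume "Q \<in> cl ` states A"
    then obtain v where v: "v \<in> states A" "Q = cl v" by blast
    define d where "d = ((v, a0), True)"
    have d: "d \<in> darts A" "dart_vertex A d = v" unfolding d_def darts_iff dart_vertex_def using v by auto
    have "Q = orbit_of \<sigma> d" using rot_orbit[OF rot d(1)] d v unfolding cl_def by simp
    then show "Q \<in> {orbit_of \<sigma> d | d. d \<in> darts A}" using d(1) by blast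
  qed
  moreover have "inj_on cl (states A)"
  proof (rule inj_onI)
    fix v w assume v: "v \<in> states A" "w \<in> states A" "cl v = cl w"
    have "((v, a0), True) \<in> cl v" unfolding cl_def darts_iff dart_vertex_def using v by auto
    then show "v = w" using v unfolding cl_def dart_vertex_def by auto
  qed
  ultimately show ?thesis unfolding zc_def by (simp add: card_image)
qed

lemma kap_empty: "kap A {} = card (states A)"
proof -
  have "adjS A {} = {}" unfolding adjS_def by simp
  then have "states A // ((adjS A {})\<^sup>* \<inter> states A \<times> states A) = (\<lambda>a. {a}) ` states A"
    unfolding quotient_def by auto
  then show ?thesis unfolding kap_def by (simp add: card_image)
qed

lemma Qv_empty:
  fixes A :: "('a::finite) dfa"
  assumes dfa: "is_dfa A" and rot: "rotation_system A \<sigma>"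
  shows "Qv A \<sigma> {} = - int (card (states A))"
  unfolding Qv_def flipS_empty kap_empty using zc_sigma[OF dfa rot] by simp

lemma Qv_edges:
  fixes A :: "('a::finite) dfa"
  assumes dfa: "is_dfa A" and rot: "rotation_system A \<sigma>"
  shows "Qv A \<sigma> (edges A) = int (num_faces A \<sigma>) - 2 * int (num_components A)"
proof -
  have "\<forall>d\<in>darts A. (\<sigma> \<circ> flip) d \<in> darts A" using rot_vertex[OF rot] flip_darts by simp
  then have fD: "(\<sigma> \<circ> flip) ` darts A \<subseteq> darts A" by blast
  have eqd: "\<forall>y\<in>darts A. (\<sigma> \<circ> flip) y = (\<sigma> \<circ> flipS (edges A)) y"
    unfolding flipS_def darts_def by auto
  have "{orbit_of (\<sigma> \<circ> flipS (edges A)) d | d. d \<in> darts A} = {orbit_of (\<sigma> \<circ> flip) d | d. d \<in> darts A}"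
    using orb_cong[OF eqd fD] by metis
  then have "zc (\<sigma> \<circ> flipS (edges A)) (darts A) = num_faces A \<sigma>" unfolding zc_def num_faces_def by simp
  moreover have "kap A (edges A) = num_components A"
    unfolding kap_def num_components_def adjS_def adj_rel_def ..
  ultimately show ?thesis unfolding Qv_def by simp
qed

lemma euler_exists:
  fixes A :: "('a::finite) dfa"
  assumes dfa: "is_dfa A" and rot: "rotation_system A \<sigma>"
  shows "\<exists>g. int (card (states A)) - int (card (edges A)) + int (num_faces A \<sigma>)
        = 2 * int (num_components A) - 2 * int g"
proof -
  have "Qv A \<sigma> ({} \<union> edges A) \<le> Qv A \<sigma> {} + int (card (edges A)) \<and>
    even (Qv A \<sigma> {} + int (card (edges A)) - Qv A \<sigma> ({} \<union> edges A))"
    by (rule Qv_acc[OF dfa rot finite_edges[OF dfa]]) auto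
  then have h: "int (num_faces A \<sigma>) - 2 * int (num_components A) \<le> - int (card (states A)) + int (card (edges A))"
    "even (- int (card (states A)) + int (card (edges A)) - (int (num_faces A \<sigma>) - 2 * int (num_components A)))"
    using Qv_empty[OF dfa rot] Qv_edges[OF dfa rot] by simp_all
  then obtain k where k: "- int (card (states A)) + int (card (edges A)) - (int (num_faces A \<sigma>) - 2 * int (num_components A)) = 2 * k"
    by (blast elim: evenE)
  have "k \<ge> 0" using h(1) k by simp
  then show ?thesis using k by (intro exI[of _ "nat k"]) simp
qed

lemma mod_succ_inj: fixes a b k :: nat assumes "a < k" "b < k" "(a+1) mod k = (b+1) mod k" shows "a = b"
proof (cases "a + 1 = k")
  case True
  then show ?thesis using assms by (cases "b + 1 = k") auto
next
  case False
  then show ?thesis using assms by (cases "b + 1 = k") auto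
qed

lemma rot_exists:
  fixes A :: "('a::finite) dfa"
  assumes dfa: "is_dfa A"
  shows "\<exists>\<sigma>. rotation_system A \<sigma>"
proof -
  define Dv where "Dv = (\<lambda>v. {d \<in> darts A. dart_vertex A d = v})"
  define k where "k = (\<lambda>v. card (Dv v))"
  have finD: "finite (darts A)" by (rule finite_darts[OF dfa])
  have finDv: "finite (Dv v)" for v unfolding Dv_def using finD by simp
  have "\<forall>v. \<exists>h. bij_betw h {0..<k v} (Dv v)" unfolding k_def using ex_bij_betw_nat_finite[OF finDv] by blast
  then obtain E where E: "\<And>v. bij_betw (E v) {0..<k v} (Dv v)" by metis
  define ix where "ix = (\<lambda>d. inv_into {0..<k (dart_vertex A d)} (E (dart_vertex A d)) d)"
  define \<sigma> where "\<sigma> = (\<lambda>d. E (dart_vertex A d) ((ix d + 1) mod k (dart_vertex A d)))"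
  have inDv: "d \<in> Dv (dart_vertex A d)" if "d \<in> darts A" for d unfolding Dv_def using that by simp
  have kpos: "k (dart_vertex A d) > 0" if "d \<in> darts A" for d
    unfolding k_def using inDv[OF that] finDv card_gt_0_iff by blast
  have ixlt: "ix d < k (dart_vertex A d)" and Eix: "E (dart_vertex A d) (ix d) = d" if "d \<in> darts A" for d
  proof -
    have "d \<in> E (dart_vertex A d) ` {0..<k (dart_vertex A d)}" using E[of "dart_vertex A d"] inDv[OF that] unfolding bij_betw_def by blast
    note mem = this
    show "ix d < k (dart_vertex A d)" unfolding ix_def using inv_into_into[OF mem] by simp
    show "E (dart_vertex A d) (ix d) = d" unfolding ix_def by (rule f_inv_into_f[OF mem])
  qed
  have Ein: "E v j \<in> Dv v" if "j < k v" for v j using E[of v] that unfolding bij_betw_def by auto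
  have vE: "dart_vertex A (E v j) = v" "E v j \<in> darts A" if "j < k v" for v j using Ein[OF that] unfolding Dv_def by auto
  have ixE: "ix (E v j) = j" if "j < k v" for v j
    unfolding ix_def vE[OF that] using E[of v] that unfolding bij_betw_def by simp
  have iter: "(\<sigma> ^^ n) d = E (dart_vertex A d) ((ix d + n) mod k (dart_vertex A d))" if d: "d \<in> darts A" for d n
  proof (induct n)
    case 0 then show ?case using Eix[OF d] ixlt[OF d] by simp
  next
    case (Suc n)
    define v where "v = dart_vertex A d"
    define j where "j = (ix d + n) mod k v"
    have jk: "j < k v" unfolding j_def using kpos[OF d] v_def by simp
    have "(\<sigma> ^^ Suc n) d = \<sigma> (E v j)" using Suc unfolding v_def j_def by simp
    also have "\<dots> = E v ((j + 1) mod k v)" unfolding \<sigma>_def vE[OF jk] ixE[OF jk] ..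
    also have "(j + 1) mod k v = (ix d + Suc n) mod k v" unfolding j_def by (simp add: mod_Suc_eq)
    finally show ?case unfolding v_def .
  qed
  have orb: "orbit_of \<sigma> d = Dv (dart_vertex A d)" if d: "d \<in> darts A" for d
  proof
    show "orbit_of \<sigma> d \<subseteq> Dv (dart_vertex A d)"
      unfolding orbit_of_def using iter[OF d] Ein kpos[OF d] by auto
    show "Dv (dart_vertex A d) \<subseteq> orbit_of \<sigma> d"
    proof
      fix d' assume d': "d' \<in> Dv (dart_vertex A d)"
      define v where "v = dart_vertex A d"
      have "d' \<in> E v ` {0..<k v}" using E[of v] d' unfolding bij_betw_def v_def by blast
      then obtain j where j: "j < k v" "d' = E v j" by auto
      have i: "ix d < k v" using ixlt[OF d] v_def by simp
      have "(ix d + (j + k v - ix d)) mod k v = j" using i j by simp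
      then have "(\<sigma> ^^ (j + k v - ix d)) d = d'" using iter[OF d] j unfolding v_def by simp
      then show "d' \<in> orbit_of \<sigma> d" unfolding orbit_of_def by blast
    qed
  qed
  have into: "\<sigma> ` darts A \<subseteq> darts A"
  proof
    fix x assume "x \<in> \<sigma> ` darts A"
    then obtain d where d: "d \<in> darts A" "x = \<sigma> d" by blast
    have "\<sigma> d \<in> orbit_of \<sigma> d" by (rule orb_step[OF orb_self])
    then show "x \<in> darts A" using orb[OF d(1)] d(2) unfolding Dv_def by blast
  qed
  have inj: "inj_on \<sigma> (darts A)"
  proof (rule inj_onI)
    fix d d' assume d: "d \<in> darts A" and d': "d' \<in> darts A" and eq: "\<sigma> d = \<sigma> d'"
    have sv: "dart_vertex A (\<sigma> x) = dart_vertex A x" if "x \<in> darts A" for x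
    proof -
      have "\<sigma> x \<in> orbit_of \<sigma> x" by (rule orb_step[OF orb_self])
      then show ?thesis using orb[OF that] unfolding Dv_def by blast
    qed
    have vv: "dart_vertex A d = dart_vertex A d'" using sv[OF d] sv[OF d'] eq by simp
    define v where "v = dart_vertex A d"
    have j1: "(ix d + 1) mod k v < k v" "(ix d' + 1) mod k v < k v" using kpos[OF d] unfolding v_def by auto
    have "E v ((ix d + 1) mod k v) = E v ((ix d' + 1) mod k v)" using eq vv unfolding \<sigma>_def v_def by simp
    then have "(ix d + 1) mod k v = (ix d' + 1) mod k v" using E[of v] j1 unfolding bij_betw_def inj_on_def by simp
    moreover have "ix d < k v" "ix d' < k v" using ixlt[OF d] ixlt[OF d'] vv unfolding v_def by auto
    ultimately have "ix d = ix d'" by (rule mod_succ_inj[rotated 2])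
    then show "d = d'" using Eix[OF d] Eix[OF d'] vv by metis
  qed
  have "bij_betw \<sigma> (darts A) (darts A)"
    unfolding bij_betw_def using inj endo_inj_surj[OF finD into inj] by simp
  then have "rotation_system A \<sigma>" unfolding rotation_system_def using orb unfolding Dv_def by blast
  then show ?thesis by blast
qed

definition reachS :: "'a dfa \<Rightarrow> nat set" where
  "reachS B = {foldl (trans B) (init B) w | w. True}"

lemma foldl_in: "is_dfa A \<Longrightarrow> p \<in> states A \<Longrightarrow> foldl (trans A) p w \<in> states A"
proof (induct w arbitrary: p)
  case (Cons a w)
  then have "trans A p a \<in> states A" unfolding is_dfa_def by blast
  then show ?case using Cons by simp
qed simp

lemma reach_sub: "is_dfa B \<Longrightarrow> reachS B \<subseteq> states B"
  unfolding reachS_def using foldl_in is_dfa_def by blast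

lemma reach_init: "init B \<in> reachS B"
  unfolding reachS_def by (auto intro: exI[of _ "[]"])

lemma reach_trans: assumes "q \<in> reachS B" shows "trans B q a \<in> reachS B"
proof -
  obtain w where "q = foldl (trans B) (init B) w" using assms unfolding reachS_def by blast
  then have "trans B q a = foldl (trans B) (init B) (w @ [a])" by simp
  then show ?thesis unfolding reachS_def by blast
qed

lemma reach_foldl: "foldl (trans B) (init B) w \<in> reachS B"
  unfolding reachS_def by blast

definition restrR :: "'a dfa \<Rightarrow> 'a dfa" where
  "restrR B = B\<lparr>states := reachS B, final := final B \<inter> reachS B\<rparr>"

lemma restrR_dfa: "is_dfa B \<Longrightarrow> is_dfa (restrR B)"
  unfolding is_dfa_def restrR_def using reach_sub[of B] reach_init[of B] reach_trans[of _ B]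
  by (auto intro: finite_subset simp: is_dfa_def)

lemma restrR_lang: "lang (restrR B) = lang B"
  unfolding lang_def restrR_def using reach_foldl[of B] by auto

lemma minimal_le_reach:
  assumes "minimal_dfa A L" "is_dfa B" "lang B = L"
  shows "card (states A) \<le> card (reachS B)"
proof -
  have "card (states A) \<le> card (states (restrR B))"
    using assms restrR_dfa[OF assms(2)] restrR_lang[of B] unfolding minimal_dfa_def by blast
  then show ?thesis unfolding restrR_def by simp
qed

lemma minimal_reach:
  assumes min: "minimal_dfa A L"
  shows "states A \<subseteq> reachS A"
proof (rule ccontr)
  assume nsub: "\<not> states A \<subseteq> reachS A"
  have dfa: "is_dfa A" using min unfolding minimal_dfa_def by simp
  have fin: "finite (states A)" using dfa unfolding is_dfa_def by simp
  have "reachS A \<subset> states A" using reach_sub[OF dfa] nsub by blast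
  then have "card (reachS A) < card (states A)" using fin by (simp add: psubset_card_mono)
  moreover have "card (states A) \<le> card (reachS A)"
    by (rule minimal_le_reach[OF min dfa]) (use min in \<open>simp add: minimal_dfa_def\<close>)
  ultimately show False by simp
qed

definition merged :: "'a dfa \<Rightarrow> nat \<Rightarrow> nat \<Rightarrow> 'a dfa" where
  "merged A p q = (let g = (\<lambda>r. if r = q then p else r) in
     A\<lparr>states := states A - {q}, init := g (init A), final := final A - {q},
       trans := (\<lambda>r a. g (trans A r a))\<rparr>)"

lemma minimal_dist:
  assumes min: "minimal_dfa A L" and p: "p \<in> states A" and q: "q \<in> states A" and pq: "p \<noteq> q"
  shows "\<exists>v. (foldl (trans A) p v \<in> final A) \<noteq> (foldl (trans A) q v \<in> final A)"
proof (rule ccontr)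
  assume "\<not> ?thesis"
  then have ind: "\<And>v. (foldl (trans A) p v \<in> final A) = (foldl (trans A) q v \<in> final A)" by blast
  have dfa: "is_dfa A" using min unfolding minimal_dfa_def by simp
  define g where "g = (\<lambda>r. if r = q then p else r)"
  define A' where "A' = merged A p q"
  have A': "states A' = states A - {q}" "init A' = g (init A)" "final A' = final A - {q}"
    "trans A' = (\<lambda>r a. g (trans A r a))" unfolding A'_def merged_def g_def Let_def by simp_all
  have gin: "g r \<in> states A - {q}" if "r \<in> states A" for r using that p pq unfolding g_def by auto
  have dfa': "is_dfa A'"
    using dfa gin unfolding is_dfa_def A' by auto
  have gind: "(foldl (trans A) (g r) v \<in> final A) = (foldl (trans A) r v \<in> final A)" for r v
    unfolding g_def using ind by simp
  have key: "(foldl (trans A') (g r) w \<in> final A') = (foldl (trans A) r w \<in> final A)"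
    if "r \<in> states A" for r w
    using that
  proof (induct w arbitrary: r)
    case Nil
    then show ?case using gind[of r "[]"] gin[OF Nil] unfolding A' by auto
  next
    case (Cons a w)
    have t: "trans A (g r) a \<in> states A" using dfa gin[OF Cons(2)] unfolding is_dfa_def by blast
    have "(foldl (trans A') (g r) (a # w) \<in> final A') = (foldl (trans A') (g (trans A (g r) a)) w \<in> final A')"
      unfolding A' by simp
    also have "\<dots> = (foldl (trans A) (trans A (g r) a) w \<in> final A)" by (rule Cons(1)[OF t])
    also have "\<dots> = (foldl (trans A) (g r) (a # w) \<in> final A)" by simp
    also have "\<dots> = (foldl (trans A) r (a # w) \<in> final A)" by (rule gind)
    finally show ?case .
  qed
  have initA: "init A \<in> states A" using dfa unfolding is_dfa_def by simp
  have "lang A' = lang A" unfolding lang_def using key[OF initA] A'(2) by simp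
  then have "card (states A) \<le> card (states A')" using min dfa' unfolding minimal_dfa_def by simp
  moreover have "card (states A') < card (states A)"
  proof -
    have "finite (states A)" using dfa unfolding is_dfa_def by simp
    then show ?thesis unfolding A' using q by (rule card_Diff1_less)
  qed
  ultimately show False by simp
qed

definition hom :: "'a dfa \<Rightarrow> 'a dfa \<Rightarrow> nat \<Rightarrow> nat" where
  "hom A B q = foldl (trans A) (init A) (SOME w. foldl (trans B) (init B) w = q)"

lemma hom_key:
  assumes min: "minimal_dfa A L" and dfaB: "is_dfa B" and lB: "lang B = L"
    and eq: "foldl (trans B) (init B) w1 = foldl (trans B) (init B) w2"
  shows "foldl (trans A) (init A) w1 = foldl (trans A) (init A) w2"
proof (rule ccontr)
  assume ne: "foldl (trans A) (init A) w1 \<noteq> foldl (trans A) (init A) w2"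
  have dfa: "is_dfa A" and lA: "lang A = L" using min unfolding minimal_dfa_def by simp_all
  have initA: "init A \<in> states A" using dfa unfolding is_dfa_def by simp
  obtain v where v: "(foldl (trans A) (foldl (trans A) (init A) w1) v \<in> final A) \<noteq>
      (foldl (trans A) (foldl (trans A) (init A) w2) v \<in> final A)"
    using minimal_dist[OF min foldl_in[OF dfa initA] foldl_in[OF dfa initA] ne] by blast
  have "(w1 @ v \<in> L) = (w2 @ v \<in> L)" using lB eq unfolding lang_def by auto
  moreover have "(w1 @ v \<in> L) \<noteq> (w2 @ v \<in> L)" using v lA[symmetric] unfolding lang_def by simp
  ultimately show False by simp
qed

lemma hom_foldl:
  assumes min: "minimal_dfa A L" and dfaB: "is_dfa B" and lB: "lang B = L"
  shows "hom A B (foldl (trans B) (init B) w) = foldl (trans A) (init A) w"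
proof -
  have ex: "\<exists>w'. foldl (trans B) (init B) w' = foldl (trans B) (init B) w" by blast
  show ?thesis unfolding hom_def by (rule hom_key[OF min dfaB lB someI_ex[OF ex]])
qed

lemma hom_trans:
  assumes min: "minimal_dfa A L" and dfaB: "is_dfa B" and lB: "lang B = L" and q: "q \<in> reachS B"
  shows "hom A B (trans B q a) = trans A (hom A B q) a"
proof -
  obtain w where w: "q = foldl (trans B) (init B) w" using q unfolding reachS_def by blast
  have "trans B q a = foldl (trans B) (init B) (w @ [a])" using w by simp
  then show ?thesis using hom_foldl[OF min dfaB lB, of "w @ [a]"] hom_foldl[OF min dfaB lB, of w] w by simp
qed

lemma hom_in:
  assumes min: "minimal_dfa A L" and dfaB: "is_dfa B" and lB: "lang B = L" and q: "q \<in> reachS B"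
  shows "hom A B q \<in> states A"
proof -
  obtain w where w: "q = foldl (trans B) (init B) w" using q unfolding reachS_def by blast
  have dfa: "is_dfa A" using min unfolding minimal_dfa_def by simp
  have initA: "init A \<in> states A" using dfa unfolding is_dfa_def by simp
  show ?thesis using hom_foldl[OF min dfaB lB, of w] w foldl_in[OF dfa initA] by simp
qed

lemma hom_surj:
  assumes min: "minimal_dfa A L" and dfaB: "is_dfa B" and lB: "lang B = L" and u: "u \<in> states A"
  shows "\<exists>q \<in> reachS B. hom A B q = u"
proof -
  obtain w where w: "u = foldl (trans A) (init A) w" using minimal_reach[OF min] u unfolding reachS_def by blast
  show ?thesis using hom_foldl[OF min dfaB lB, of w] w reach_foldl[of B w] by metis
qed

lemma cyc_from_darts:
  assumes k: "length Ds = k" "k \<ge> 1" and inD: "set Ds \<subseteq> darts A"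
    and chain: "\<forall>i<k. dart_vertex A (Ds ! ((i + 1) mod k)) = dart_vertex A (flip (Ds ! i))"
    and dist: "distinct (map fst Ds)"
  shows "has_simple_cycle A k"
proof -
  define vs where "vs = map (dart_vertex A) Ds @ [dart_vertex A (Ds ! 0)]"
  define es where "es = map fst Ds"
  have lv: "length vs = Suc k" unfolding vs_def using k by simp
  have le: "length es = k" unfolding es_def using k by simp
  have vsi: "vs ! i = dart_vertex A (Ds ! (i mod k))" if "i \<le> k" for i
  proof (cases "i = k")
    case True then show ?thesis unfolding vs_def using k by (simp add: nth_append)
  next
    case False then have "i < k" using that by simp
    then show ?thesis unfolding vs_def using k by (simp add: nth_append)
  qed
  have "set es \<subseteq> edges A" unfolding es_def using inD unfolding darts_def by auto
  moreover have "vs ! 0 = vs ! k" using vsi[of 0] vsi[of k] k by simp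
  moreover have "\<forall>i<k. joins A (es ! i) (vs ! i) (vs ! Suc i)"
  proof (intro allI impI)
    fix i assume i: "i < k"
    have "vs ! i = dart_vertex A (Ds ! i)" using vsi[of i] i by simp
    moreover have "vs ! Suc i = dart_vertex A (flip (Ds ! i))" using vsi[of "Suc i"] i chain by simp
    moreover have "es ! i = fst (Ds ! i)" unfolding es_def using i k by simp
    ultimately show "joins A (es ! i) (vs ! i) (vs ! Suc i)" using joins_dart by metis
  qed
  ultimately show ?thesis unfolding has_simple_cycle_def using k lv le dist es_def by blast
qed

lemma same_edge: "fst D1 = fst D0 \<Longrightarrow> D1 = D0 \<or> D1 = flip D0"
  unfolding flip_def by (cases D1, cases D0) auto

lemma no_loop_dart:
  assumes "\<not> has_simple_cycle A 1" "D \<in> darts A"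
  shows "dart_vertex A D \<noteq> dart_vertex A (flip D)"
proof
  assume h: "dart_vertex A D = dart_vertex A (flip D)"
  have "has_simple_cycle A 1"
    by (rule cyc_from_darts[of "[D]"]) (use assms h in auto)
  then show False using assms by simp
qed

lemma two_darts:
  assumes n1: "\<not> has_simple_cycle A 1" and n2: "\<not> has_simple_cycle A 2"
    and D: "D0 \<in> darts A" "D1 \<in> darts A"
    and c: "dart_vertex A D1 = dart_vertex A (flip D0)" "dart_vertex A D0 = dart_vertex A (flip D1)"
  shows "D1 = flip D0"
proof (cases "fst D1 = fst D0")
  case True
  then consider "D1 = D0" | "D1 = flip D0" using same_edge by blast
  then show ?thesis
  proof cases
    case 1 then show ?thesis using c no_loop_dart[OF n1 D(1)] by simp
  qed simp
next
  case False
  have "has_simple_cycle A 2"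
  proof (rule cyc_from_darts[of "[D0, D1]"])
    show "\<forall>i<2. dart_vertex A ([D0, D1] ! ((i + 1) mod 2)) = dart_vertex A (flip ([D0, D1] ! i))"
      using c by (auto simp: less_Suc_eq numeral_2_eq_2)
  qed (use D False in auto)
  then show ?thesis using n2 by simp
qed

lemma three_darts:
  assumes n1: "\<not> has_simple_cycle A 1" and n2: "\<not> has_simple_cycle A 2" and n3: "\<not> has_simple_cycle A 3"
    and D: "D0 \<in> darts A" "D1 \<in> darts A" "D2 \<in> darts A"
    and c: "dart_vertex A D1 = dart_vertex A (flip D0)" "dart_vertex A D2 = dart_vertex A (flip D1)"
      "dart_vertex A D0 = dart_vertex A (flip D2)"
  shows False
proof -
  have bt: False if "Y = flip X" "X \<in> darts A" "Y \<in> darts A" "Z \<in> darts A"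
    "dart_vertex A Y = dart_vertex A (flip X)" "dart_vertex A Z = dart_vertex A (flip Y)"
    "dart_vertex A X = dart_vertex A (flip Z)" for X Y Z
  proof -
    have "dart_vertex A Z = dart_vertex A (flip Z)" using that by simp
    then show False using no_loop_dart[OF n1 that(4)] by simp
  qed
  have ne: "fst Y \<noteq> fst X" if "Y \<noteq> flip X" "X \<in> darts A" "dart_vertex A Y = dart_vertex A (flip X)" for X Y
  proof
    assume "fst Y = fst X"
    then have "Y = X" using same_edge that(1) by blast
    then show False using that no_loop_dart[OF n1 that(2)] by simp
  qed
  have b0: "D1 \<noteq> flip D0" using bt[OF _ D(1) D(2) D(3) c(1) c(2) c(3)] by blast
  have b1: "D2 \<noteq> flip D1" using bt[OF _ D(2) D(3) D(1) c(2) c(3) c(1)] by blast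
  have b2: "D0 \<noteq> flip D2" using bt[OF _ D(3) D(1) D(2) c(3) c(1) c(2)] by blast
  note f = ne[OF b0 D(1) c(1)] ne[OF b1 D(2) c(2)] ne[OF b2 D(3) c(3)]
  have dist: "distinct (map fst [D0, D1, D2])" using f by simp
  have "has_simple_cycle A 3"
  proof (rule cyc_from_darts[of "[D0, D1, D2]", OF _ _ _ _ dist])
    show "\<forall>i<3. dart_vertex A ([D0, D1, D2] ! ((i + 1) mod 3)) = dart_vertex A (flip ([D0, D1, D2] ! i))"
    proof (intro allI impI)
      fix i :: nat assume "i < 3"
      then consider "i = 0" | "i = 1" | "i = 2" by linarith
      then show "dart_vertex A ([D0, D1, D2] ! ((i + 1) mod 3)) = dart_vertex A (flip ([D0, D1, D2] ! i))"
        by cases (use c in simp_all)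
    qed
    show "set [D0, D1, D2] \<subseteq> darts A" using D by simp
  qed simp_all
  then show False using n3 by simp
qed

lemma four_darts_bt:
  assumes n1: "\<not> has_simple_cycle A 1" and n2: "\<not> has_simple_cycle A 2"
    and D: "D0 \<in> darts A" "D1 \<in> darts A" "D2 \<in> darts A" "D3 \<in> darts A"
    and c: "dart_vertex A D1 = dart_vertex A (flip D0)" "dart_vertex A D2 = dart_vertex A (flip D1)"
      "dart_vertex A D3 = dart_vertex A (flip D2)" "dart_vertex A D0 = dart_vertex A (flip D3)"
    and b: "D1 = flip D0"
  shows "D3 = flip D2"
proof (rule two_darts[OF n1 n2 D(3) D(4) c(3)])
  show "dart_vertex A D2 = dart_vertex A (flip D3)" using c b by simp
qed

lemma four_darts_nobt:
  assumes n1: "\<not> has_simple_cycle A 1" and n2: "\<not> has_simple_cycle A 2" and n4: "\<not> has_simple_cycle A 4"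
    and D: "D0 \<in> darts A" "D1 \<in> darts A" "D2 \<in> darts A" "D3 \<in> darts A"
    and c: "dart_vertex A D1 = dart_vertex A (flip D0)" "dart_vertex A D2 = dart_vertex A (flip D1)"
      "dart_vertex A D3 = dart_vertex A (flip D2)" "dart_vertex A D0 = dart_vertex A (flip D3)"
  shows "D1 = flip D0 \<or> D2 = flip D1 \<or> D3 = flip D2 \<or> D0 = flip D3"
proof (rule ccontr)
  assume "\<not> ?thesis"
  then have b: "D1 \<noteq> flip D0" "D2 \<noteq> flip D1" "D3 \<noteq> flip D2" "D0 \<noteq> flip D3" by auto
  have ne: "fst Y \<noteq> fst X" if "Y \<noteq> flip X" "X \<in> darts A" "dart_vertex A Y = dart_vertex A (flip X)" for X Y
  proof
    assume "fst Y = fst X"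
    then have "Y = X" using same_edge that(1) by blast
    then show False using that no_loop_dart[OF n1 that(2)] by simp
  qed
  have opp: "fst Z \<noteq> fst X" if "Y \<noteq> flip X" "X \<in> darts A" "Y \<in> darts A"
    "dart_vertex A Y = dart_vertex A (flip X)" "dart_vertex A Z = dart_vertex A (flip Y)" for X Y Z
  proof
    assume "fst Z = fst X"
    then consider "Z = X" | "Z = flip X" using same_edge by blast
    then show False
    proof cases
      case 1
      then have "Y = flip X" using two_darts[OF n1 n2 that(2) that(3) that(4)] that(5) by simp
      then show False using that(1) by simp
    next
      case 2
      then have "dart_vertex A Y = dart_vertex A (flip Y)" using that by simp
      then show False using no_loop_dart[OF n1 that(3)] by simp
    qed
  qed
  note f = ne[OF b(1) D(1) c(1)] ne[OF b(2) D(2) c(2)] ne[OF b(3) D(3) c(3)] ne[OF b(4) D(4) c(4)]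
    opp[OF b(1) D(1) D(2) c(1) c(2)] opp[OF b(2) D(2) D(3) c(2) c(3)]
  have dist: "distinct (map fst [D0, D1, D2, D3])" using f by simp
  have "has_simple_cycle A 4"
  proof (rule cyc_from_darts[of "[D0, D1, D2, D3]", OF _ _ _ _ dist])
    show "\<forall>i<4. dart_vertex A ([D0, D1, D2, D3] ! ((i + 1) mod 4)) = dart_vertex A (flip ([D0, D1, D2, D3] ! i))"
    proof (intro allI impI)
      fix i :: nat assume "i < 4"
      then consider "i = 0" | "i = 1" | "i = 2" | "i = 3" by linarith
      then show "dart_vertex A ([D0, D1, D2, D3] ! ((i + 1) mod 4)) = dart_vertex A (flip ([D0, D1, D2, D3] ! i))"
        by cases (use c in simp_all)
    qed
    show "set [D0, D1, D2, D3] \<subseteq> darts A" using D by simp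
  qed simp_all
  then show False using n4 by simp
qed

locale FB =
  fixes A :: "('a::finite) dfa" and B :: "'a dfa" and L :: "'a list set"
    and \<sigma> :: "(nat \<times> 'a) \<times> bool \<Rightarrow> (nat \<times> 'a) \<times> bool"
  assumes min: "minimal_dfa A L" and dfaB: "is_dfa B" and lB: "lang B = L"
    and rot: "rotation_system B \<sigma>" and m2: "CARD('a) \<ge> 2"
begin

definition R where "R = reachS B"
definition RD where "RD = {d \<in> darts B. fst (fst d) \<in> R}"
definition h where "h = hom A B"
definition H where "H d = ((h (fst (fst d)), snd (fst d)), snd d)"
definition retk where "retk d = (LEAST k. 0 < k \<and> (\<sigma> ^^ k) d \<in> RD)"
definition sR where "sR d = (\<sigma> ^^ retk d) d"
definition nxt where "nxt d = sR (flip d)"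
definition SR where "SR = R \<times> (UNIV :: 'a set)"
definition psi where "psi = \<sigma> \<circ> flipS SR"
definition bad where "bad b \<longleftrightarrow> H (sR b) = H b"
definition U where "U = states B - R"

abbreviation vB where "vB \<equiv> dart_vertex B"
abbreviation vA where "vA \<equiv> dart_vertex A"

lemma dfaA: "is_dfa A" using min unfolding minimal_dfa_def by simp
lemma RsubV: "R \<subseteq> states B" unfolding R_def by (rule reach_sub[OF dfaB])
lemma R_trans: "q \<in> R \<Longrightarrow> trans B q a \<in> R" unfolding R_def by (rule reach_trans)
lemma initR: "init B \<in> R" unfolding R_def by (rule reach_init)
lemma finD: "finite (darts B)" by (rule finite_darts[OF dfaB])
lemma finV: "finite (states B)" using dfaB unfolding is_dfa_def by simp
lemma finR: "finite R" using finite_subset[OF RsubV finV] .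

lemma RD_darts: "d \<in> RD \<Longrightarrow> d \<in> darts B" unfolding RD_def by simp
lemma RD_flip[simp]: "flip d \<in> RD \<longleftrightarrow> d \<in> RD" unfolding RD_def by simp
lemma RD_vtx: "d \<in> RD \<Longrightarrow> vB d \<in> R"
  unfolding RD_def dart_vertex_def using R_trans by auto
lemma out_RD: "v \<in> R \<Longrightarrow> ((v, a), True) \<in> RD \<and> vB ((v, a), True) = v"
  unfolding RD_def darts_iff dart_vertex_def using RsubV by auto
lemma RD_iff: "d \<in> darts B \<Longrightarrow> d \<in> RD \<longleftrightarrow> fst d \<in> SR"
  unfolding RD_def SR_def by (cases d) auto

lemma sig_bij: "bij_betw \<sigma> (darts B) (darts B)" by (rule rot_bij[OF rot])

lemma sig_iter: "d \<in> darts B \<Longrightarrow> (\<sigma> ^^ k) d \<in> darts B \<and> vB ((\<sigma> ^^ k) d) = vB d"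
proof (induct k)
  case (Suc k) then show ?case using rot_vertex[OF rot, of "(\<sigma> ^^ k) d"] by simp
qed simp

lemma sig_orbit: "d \<in> darts B \<Longrightarrow> orbit_of \<sigma> d = {d' \<in> darts B. vB d' = vB d}"
  by (rule rot_orbit[OF rot])

lemma retk_ex: assumes "d \<in> RD" shows "\<exists>k. 0 < k \<and> (\<sigma> ^^ k) d \<in> RD"
proof -
  obtain p where "p > 0" "(\<sigma> ^^ p) d = d" using period[OF sig_bij finD RD_darts[OF assms]] by blast
  then show ?thesis using assms by auto
qed

lemma retk: assumes "d \<in> RD" shows "0 < retk d" "sR d \<in> RD"
  using LeastI_ex[OF retk_ex[OF assms]] unfolding retk_def sR_def by auto

lemma retk_min: assumes "0 < t" "t < retk d" shows "(\<sigma> ^^ t) d \<notin> RD"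
  using not_less_Least[of t "\<lambda>k. 0 < k \<and> (\<sigma> ^^ k) d \<in> RD"] assms unfolding retk_def by blast

lemma sR_vtx: assumes "d \<in> RD" shows "vB (sR d) = vB d"
  unfolding sR_def using sig_iter[OF RD_darts[OF assms]] by simp

lemma two_letters: "\<exists>a1 a2 :: 'a. a1 \<noteq> a2"
proof -
  have "\<not> (\<forall>a1 a2 :: 'a. a1 = a2)"
  proof
    assume "\<forall>a1 a2 :: 'a. a1 = a2"
    then have "(UNIV :: 'a set) \<subseteq> {undefined}" by blast
    then have "card (UNIV :: 'a set) \<le> card {undefined :: 'a}" by (intro card_mono) simp_all
    then have "card (UNIV :: 'a set) \<le> 1" by simp
    then show False using m2 by simp
  qed
  then show ?thesis by blast
qed

lemma other_out: fixes d :: "(nat \<times> 'a) \<times> bool" assumes "v \<in> R" shows "\<exists>a. ((v, a), True) \<noteq> d"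
proof -
  obtain a1 a2 :: 'a where "a1 \<noteq> a2" using two_letters by blast
  then show ?thesis by (cases "((v, a1), True) = d") auto
qed

lemma sR_ne: assumes d: "d \<in> RD" shows "sR d \<noteq> d"
proof
  assume eq: "sR d = d"
  define k where "k = retk d"
  have k: "0 < k" "(\<sigma> ^^ k) d = d" using retk[OF d] eq unfolding k_def sR_def by auto
  obtain a where a: "((vB d, a), True) \<noteq> d" using other_out[OF RD_vtx[OF d]] by blast
  define y where "y = ((vB d, a), True)"
  have y: "y \<in> RD" "vB y = vB d" unfolding y_def using out_RD[OF RD_vtx[OF d]] by auto
  have "y \<in> orbit_of \<sigma> d" using sig_orbit[OF RD_darts[OF d]] y RD_darts by auto
  then obtain j where j: "y = (\<sigma> ^^ j) d" unfolding orbit_of_def by blast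
  have yj: "y = (\<sigma> ^^ (j mod k)) d" using j funpow_mod_eq[OF k(2)] by simp
  have "j mod k < k" using k(1) by simp
  show False
  proof (cases "j mod k = 0")
    case True then show False using yj a unfolding y_def by simp
  next
    case False
    then have "(\<sigma> ^^ (j mod k)) d \<notin> RD" using retk_min[of "j mod k" d] \<open>j mod k < k\<close> unfolding k_def by simp
    then show False using yj y by simp
  qed
qed

lemma retk_le: assumes "0 < j" "(\<sigma> ^^ j) d \<in> RD" shows "retk d \<le> j"
  unfolding retk_def by (rule Least_le) (use assms in simp)

lemma sR_closure:
  assumes G: "G \<subseteq> RD" "\<forall>b\<in>G. sR b \<in> G"
  shows "d \<in> G \<Longrightarrow> (\<sigma> ^^ j) d \<in> RD \<Longrightarrow> (\<sigma> ^^ j) d \<in> G"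
proof (induct j arbitrary: d rule: less_induct)
  case (less j)
  show ?case
  proof (cases "j = 0")
    case True then show ?thesis using less by simp
  next
    case False
    have dRD: "d \<in> RD" using less G by blast
    define k where "k = retk d"
    have kj: "k \<le> j" unfolding k_def using retk_le[of j d] False less by simp
    have k0: "0 < k" using retk(1)[OF dRD] unfolding k_def .
    have sRG: "sR d \<in> G" using G less by blast
    have "(\<sigma> ^^ j) d = (\<sigma> ^^ (j - k)) ((\<sigma> ^^ k) d)" using kj by (simp add: funpow_add[symmetric, THEN fun_cong, simplified comp_def])
    also have "(\<sigma> ^^ k) d = sR d" unfolding sR_def k_def ..
    finally have e: "(\<sigma> ^^ j) d = (\<sigma> ^^ (j - k)) (sR d)" .
    have "(\<sigma> ^^ (j - k)) (sR d) \<in> G" using less(1)[of "j - k" "sR d"] k0 kj sRG less(3) e False by simp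
    then show ?thesis using e by simp
  qed
qed

lemma sR_closure_all:
  assumes G: "G \<subseteq> RD" "\<forall>b\<in>G. sR b \<in> G" and d: "d \<in> G" and y: "y \<in> RD" "vB y = vB d"
  shows "y \<in> G"
proof -
  have dD: "d \<in> darts B" using G d RD_darts by blast
  have "y \<in> orbit_of \<sigma> d" unfolding sig_orbit[OF dD] using y RD_darts by blast
  then obtain j where "y = (\<sigma> ^^ j) d" unfolding orbit_of_def by blast
  then show ?thesis using sR_closure[OF G d] y by simp
qed

lemma nxt: assumes d: "d \<in> RD" shows "nxt d \<in> RD" "vB (nxt d) = vB (flip d)" "nxt d \<noteq> flip d"
  unfolding nxt_def using retk(2) sR_vtx sR_ne d by auto

end

context FB begin

lemma psi_bij: "bij_betw psi (darts B) (darts B)" unfolding psi_def by (rule piS_bij[OF rot])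

lemma psi_RD: assumes "d \<in> RD" shows "psi d = \<sigma> (flip d)"
proof -
  have "fst d \<in> SR" using RD_iff[OF RD_darts[OF assms]] assms by simp
  then show ?thesis unfolding psi_def flipS_def by simp
qed

lemma psi_nRD: assumes "d \<in> darts B" "d \<notin> RD" shows "psi d = \<sigma> d"
proof -
  have "fst d \<notin> SR" using RD_iff[OF assms(1)] assms by simp
  then show ?thesis unfolding psi_def flipS_def by simp
qed

lemma psi_iter: assumes d: "d \<in> RD"
  shows "1 \<le> t \<Longrightarrow> t \<le> retk (flip d) \<Longrightarrow> (psi ^^ t) d = (\<sigma> ^^ t) (flip d)"
proof (induct t)
  case 0 then show ?case by simp
next
  case (Suc t)
  show ?case
  proof (cases "t = 0")
    case True then show ?thesis using psi_RD[OF d] by simp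
  next
    case False
    then have IH: "(psi ^^ t) d = (\<sigma> ^^ t) (flip d)" using Suc by simp
    have nr: "(\<sigma> ^^ t) (flip d) \<notin> RD" using retk_min[of t "flip d"] False Suc by simp
    have dd: "(\<sigma> ^^ t) (flip d) \<in> darts B" using sig_iter[of "flip d" t] RD_darts d by simp
    show ?thesis using IH psi_nRD[OF dd nr] by simp
  qed
qed

lemma nxt_psi: assumes d: "d \<in> RD"
  shows "nxt d = (psi ^^ retk (flip d)) d" "\<And>t. 0 < t \<Longrightarrow> t < retk (flip d) \<Longrightarrow> (psi ^^ t) d \<notin> RD"
proof -
  have fd: "flip d \<in> RD" using d by simp
  have k: "0 < retk (flip d)" using retk(1)[OF fd] .
  show "nxt d = (psi ^^ retk (flip d)) d" unfolding nxt_def sR_def using psi_iter[OF d, of "retk (flip d)"] k by simp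
  fix t assume t: "0 < t" "t < retk (flip d)"
  then show "(psi ^^ t) d \<notin> RD" using psi_iter[OF d, of t] retk_min[OF t] by simp
qed

lemma L2: "d \<in> RD \<Longrightarrow> 0 < j \<Longrightarrow> (psi ^^ j) d \<in> RD \<Longrightarrow> \<exists>i>0. (psi ^^ j) d = (nxt ^^ i) d"
proof (induct j arbitrary: d rule: less_induct)
  case (less j)
  define k where "k = retk (flip d)"
  have k0: "0 < k" using retk(1)[of "flip d"] less(2) unfolding k_def by simp
  have kj: "k \<le> j" using nxt_psi(2)[OF less(2), of j] less(3,4) unfolding k_def by (meson not_le)
  show ?case
  proof (cases "j = k")
    case True then show ?thesis using nxt_psi(1)[OF less(2)] unfolding k_def by (intro exI[of _ 1]) simp
  next
    case False
    have e: "(psi ^^ j) d = (psi ^^ (j - k)) (nxt d)"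
      using nxt_psi(1)[OF less(2)] kj unfolding k_def[symmetric]
      by (simp add: funpow_add[symmetric, THEN fun_cong, simplified comp_def])
    have "\<exists>i>0. (psi ^^ (j - k)) (nxt d) = (nxt ^^ i) (nxt d)"
      using less(1)[of "j - k" "nxt d"] nxt(1)[OF less(2)] k0 kj False less(4) e by simp
    then obtain i where "i > 0" "(psi ^^ j) d = (nxt ^^ i) (nxt d)" using e by auto
    then show ?thesis by (intro exI[of _ "Suc i"]) (simp add: funpow_Suc_right del: funpow.simps)
  qed
qed

lemma nxt_orb: assumes d: "d \<in> RD" shows "(nxt ^^ i) d \<in> orbit_of psi d \<and> (nxt ^^ i) d \<in> RD"
proof (induct i)
  case 0 then show ?case using d orb_self by simp
next
  case (Suc i)
  define x where "x = (nxt ^^ i) d"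
  have x: "x \<in> orbit_of psi d" "x \<in> RD" using Suc unfolding x_def by auto
  have "nxt x \<in> orbit_of psi x" unfolding nxt_psi(1)[OF x(2)] by (rule orb_iter)
  then have "nxt x \<in> orbit_of psi d" using orb_trans x(1) by metis
  then show ?case using nxt(1)[OF x(2)] unfolding x_def by simp
qed

lemma nxt_period: assumes d: "d \<in> RD" shows "\<exists>i>0. (nxt ^^ i) d = d"
proof -
  obtain P where P: "P > 0" "(psi ^^ P) d = d" using period[OF psi_bij finD RD_darts[OF d]] by blast
  then show ?thesis using L2[OF d P(1)] d by auto
qed

lemma orbit_RD: assumes d: "d \<in> RD" shows "orbit_of psi d \<inter> RD = {(nxt ^^ i) d | i. True}"
proof
  show "{(nxt ^^ i) d | i. True} \<subseteq> orbit_of psi d \<inter> RD" using nxt_orb[OF d] by blast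
  show "orbit_of psi d \<inter> RD \<subseteq> {(nxt ^^ i) d | i. True}"
  proof
    fix y assume y: "y \<in> orbit_of psi d \<inter> RD"
    then obtain j where j: "y = (psi ^^ j) d" unfolding orbit_of_def by blast
    show "y \<in> {(nxt ^^ i) d | i. True}"
    proof (cases "j = 0")
      case True then show ?thesis using j by (auto intro: exI[of _ 0])
    next
      case False then show ?thesis using L2[OF d, of j] y j by auto
    qed
  qed
qed

end

context FB begin

definition Orbs where "Orbs = {orbit_of psi d | d. d \<in> darts B}"
definition A1 where "A1 = {Q \<in> Orbs. Q \<inter> RD \<noteq> {}}"

lemma finOrbs: "finite Orbs" unfolding Orbs_def by (rule finite_orbs[OF finD])
lemma finA1: "finite A1" unfolding A1_def using finOrbs by simp

lemma A2_char: assumes d: "d \<in> darts B" and Q: "orbit_of psi d \<inter> RD = {}"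
  shows "vB d \<in> U \<and> orbit_of psi d = {d' \<in> darts B. vB d' = vB d}"
proof -
  have fD: "psi ` darts B \<subseteq> darts B" using fD_of[OF psi_bij] .
  have it: "(psi ^^ n) d = (\<sigma> ^^ n) d" for n
  proof (induct n)
    case (Suc n)
    have "(psi ^^ n) d \<in> orbit_of psi d" by (rule orb_iter)
    then have nr: "(psi ^^ n) d \<notin> RD" using Q by blast
    have dd: "(psi ^^ n) d \<in> darts B" by (rule fp_in[OF fD d])
    show ?case using psi_nRD[OF dd nr] Suc by simp
  qed simp
  have eq: "orbit_of psi d = orbit_of \<sigma> d" unfolding orbit_of_def using it by simp
  then have eq2: "orbit_of psi d = {d' \<in> darts B. vB d' = vB d}" using sig_orbit[OF d] by simp
  have "vB d \<notin> R"
  proof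
    assume "vB d \<in> R"
    then obtain a where "((vB d, a), True) \<in> RD" "vB ((vB d, a), True) = vB d" using out_RD by blast
    then have "((vB d, a), True) \<in> orbit_of psi d \<inter> RD" unfolding eq2 using RD_darts by blast
    then show False using Q by simp
  qed
  then show ?thesis using eq2 dart_vertex_in[OF dfaB d] unfolding U_def by simp
qed

lemma zc_psi_le: "zc psi (darts B) \<le> card U + card A1"
proof -
  define cl where "cl = (\<lambda>u. {d' \<in> darts B. vB d' = u})"
  have "Orbs \<subseteq> A1 \<union> cl ` U"
  proof
    fix Q assume "Q \<in> Orbs"
    then obtain d where d: "d \<in> darts B" "Q = orbit_of psi d" unfolding Orbs_def by blast
    show "Q \<in> A1 \<union> cl ` U"
    proof (cases "Q \<inter> RD = {}")
      case True
      then show ?thesis using A2_char[OF d(1)] d unfolding cl_def by auto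
    next
      case False then show ?thesis unfolding A1_def using \<open>Q \<in> Orbs\<close> by blast
    qed
  qed
  moreover have "finite U" unfolding U_def using finV by simp
  ultimately have "card Orbs \<le> card A1 + card (cl ` U)"
    using finA1 by (meson card_Un_le card_mono finite_UnI finite_imageI le_trans)
  also have "card (cl ` U) \<le> card U" using \<open>finite U\<close> by (rule card_image_le)
  finally show ?thesis unfolding zc_def Orbs_def psi_def by simp
qed

lemma adjSR_R: "(a, b) \<in> adjS B SR \<Longrightarrow> a \<in> R \<and> b \<in> R"
  unfolding adjS_def SR_def joins_def using R_trans by auto

lemma U_single: "(u, w) \<in> (adjS B SR)\<^sup>* \<Longrightarrow> u \<notin> R \<Longrightarrow> w = u"
proof (induct rule: rtrancl_induct)
  case (step y z)
  then show ?case using adjSR_R by blast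
qed simp

lemma kap_SR: "card U + 1 \<le> kap B SR"
proof -
  define Rel where "Rel = (adjS B SR)\<^sup>* \<inter> states B \<times> states B"
  define f where "f = (\<lambda>x. Rel `` {x})"
  have initV: "init B \<in> states B" using dfaB unfolding is_dfa_def by simp
  have fu: "f u = {u}" if "u \<in> U" for u
  proof -
    have "u \<in> states B" "u \<notin> R" using that unfolding U_def by auto
    then show ?thesis unfolding f_def Rel_def using U_single by auto
  qed
  have finit: "init B \<in> f (init B)" unfolding f_def Rel_def using initV by simp
  have iU: "init B \<notin> U" unfolding U_def using initR by simp
  have inj: "inj_on f (insert (init B) U)"
  proof (rule inj_onI)
    fix x y assume x: "x \<in> insert (init B) U" and y: "y \<in> insert (init B) U" and e: "f x = f y"
    show "x = y"
    proof (cases "x = init B")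
      case True
      show ?thesis
      proof (cases "y = init B")
        case False then have "y \<in> U" using y by simp
        then have "init B = y" using e True finit fu by auto
        then show ?thesis using False by simp
      qed (use True in simp)
    next
      case False
      then have xU: "x \<in> U" using x by simp
      show ?thesis
      proof (cases "y = init B")
        case True then have "init B = x" using e finit fu[OF xU] by auto
        then show ?thesis using False by simp
      next
        case False then have "y \<in> U" using y by simp
        then show ?thesis using e fu xU by auto
      qed
    qed
  qed
  have img: "f ` insert (init B) U \<subseteq> states B // Rel"
    unfolding f_def using initV U_def by (auto intro: quotientI)
  have fq: "finite (states B // Rel)" unfolding Rel_def by (rule finite_quotient[OF finV]) blast
  have "card (insert (init B) U) \<le> card (states B // Rel)" by (rule card_inj_on_le[OF inj img fq])
  moreover have "card (insert (init B) U) = card U + 1" using iU finV unfolding U_def by simp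
  ultimately show ?thesis unfolding kap_def Rel_def by simp
qed

lemma SR_edges: "SR \<subseteq> edges B" unfolding SR_def edges_def using RsubV by auto

lemma Qv_fin: "Qv B \<sigma> (edges B) \<le> Qv B \<sigma> SR + int (card U * CARD('a))"
proof -
  define X where "X = edges B - SR"
  have XU: "X = U \<times> (UNIV :: 'a set)" unfolding X_def U_def edges_def SR_def by auto
  have "Qv B \<sigma> (SR \<union> X) \<le> Qv B \<sigma> SR + int (card X) \<and> even (Qv B \<sigma> SR + int (card X) - Qv B \<sigma> (SR \<union> X))"
    by (rule Qv_acc[OF dfaB rot]) (use finite_edges[OF dfaB] in \<open>auto simp: X_def\<close>)
  moreover have "SR \<union> X = edges B" unfolding X_def using SR_edges by blast
  moreover have "card X = card U * CARD('a)" unfolding XU by (simp add: card_cartesian_product)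
  ultimately show ?thesis by simp
qed

lemma genus_lb:
  assumes eq: "int (card (states B)) - int (card (edges B)) + int (num_faces B \<sigma>) = 2 * int (num_components B) - 2 * int g"
  shows "2 * int g \<ge> 2 + (int CARD('a) - 1) * int (card R) - int (card A1)"
proof -
  have q1: "Qv B \<sigma> (edges B) = int (num_faces B \<sigma>) - 2 * int (num_components B)" by (rule Qv_edges[OF dfaB rot])
  have q2: "Qv B \<sigma> SR = int (zc psi (darts B)) - 2 * int (kap B SR)" unfolding Qv_def psi_def ..
  have V: "card (states B) = card R + card U" unfolding U_def using RsubV finV
    by (metis card_Diff_subset finite_subset le_add_diff_inverse card_mono)
  have E: "card (edges B) = card (states B) * CARD('a)" by (rule card_edges)
  have z: "int (zc psi (darts B)) \<le> int (card U) + int (card A1)" using zc_psi_le by simp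
  have k: "int (card U) + 1 \<le> int (kap B SR)" using kap_SR by simp
  have f: "int (num_faces B \<sigma>) - 2 * int (num_components B) \<le> int (card U) + int (card A1) - 2 * (int (card U) + 1) + int (card U) * int CARD('a)"
    using Qv_fin q1 q2 z k by simp
  have "2 * int g = 2 * int (num_components B) - int (card (states B)) + int (card (edges B)) - int (num_faces B \<sigma>)"
    using eq by simp
  also have "int (card (edges B)) = (int (card R) + int (card U)) * int CARD('a)" unfolding E V by simp
  finally have "2 * int g = 2 * int (num_components B) - (int (card R) + int (card U)) + (int (card R) + int (card U)) * int CARD('a) - int (num_faces B \<sigma>)"
    unfolding V by simp
  then show ?thesis using f by (simp add: algebra_simps)
qed

end

context FB begin

lemma h_in: "q \<in> R \<Longrightarrow> h q \<in> states A"
  unfolding h_def R_def by (rule hom_in[OF min dfaB lB])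

lemma h_trans: "q \<in> R \<Longrightarrow> h (trans B q a) = trans A (h q) a"
  unfolding h_def R_def by (rule hom_trans[OF min dfaB lB])

lemma H_darts: "d \<in> RD \<Longrightarrow> H d \<in> darts A"
  unfolding H_def darts_iff RD_def using h_in by simp

lemma H_vtx: assumes "d \<in> RD" shows "vA (H d) = h (vB d)"
  using assms h_trans unfolding H_def dart_vertex_def RD_def by auto

lemma H_flip: "H (flip d) = flip (H d)" unfolding H_def flip_def by simp

lemma chain: assumes "d \<in> RD" shows "vA (H (nxt d)) = vA (flip (H d))"
proof -
  have "vA (H (nxt d)) = h (vB (nxt d))" using H_vtx nxt(1)[OF assms] by simp
  also have "\<dots> = h (vB (flip d))" using nxt(2)[OF assms] by simp
  also have "\<dots> = vA (H (flip d))" using H_vtx[of "flip d"] assms by simp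
  finally show ?thesis unfolding H_flip .
qed

lemma bad_flip: "bad (flip x) \<longleftrightarrow> H (nxt x) = flip (H x)"
  unfolding bad_def nxt_def H_flip ..

lemma bt_B: assumes d: "d \<in> RD" and b: "H (nxt d) = flip (H d)"
  shows "snd d \<and> \<not> snd (nxt d)"
proof -
  define e where "e = nxt d"
  have e: "vB e = vB (flip d)" "e \<noteq> flip d" using nxt[OF d] unfolding e_def by auto
  have he: "snd (fst e) = snd (fst d)" "snd e = (\<not> snd d)" using b unfolding e_def[symmetric] H_def flip_def by auto
  have ne: "fst (fst e) \<noteq> fst (fst d)"
  proof
    assume "fst (fst e) = fst (fst d)"
    then have "e = flip d" using he unfolding flip_def by (cases e, cases d) auto
    then show False using e by simp
  qed
  show ?thesis
  proof (cases "snd d")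
    case False
    then have "vB (flip d) = fst (fst d)" "vB e = fst (fst e)" using he unfolding dart_vertex_def by auto
    then show ?thesis using e ne by simp
  next
    case True then show ?thesis using he unfolding e_def by simp
  qed
qed

definition per where "per d = (LEAST i. 0 < i \<and> (nxt ^^ i) d = d)"

lemma per: assumes "d \<in> RD" shows "0 < per d" "(nxt ^^ per d) d = d"
  using LeastI_ex[OF nxt_period[OF assms]] unfolding per_def by auto

lemma per_min: "0 < m \<Longrightarrow> m < per d \<Longrightarrow> (nxt ^^ m) d \<noteq> d"
  using not_less_Least[of m "\<lambda>i. 0 < i \<and> (nxt ^^ i) d = d"] unfolding per_def by blast

lemma orbit_RD_per: assumes d: "d \<in> RD"
  shows "orbit_of psi d \<inter> RD = (\<lambda>i. (nxt ^^ i) d) ` {0..<per d}"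
    "card (orbit_of psi d \<inter> RD) = per d"
proof -
  have "{(nxt ^^ i) d | i. True} = (\<lambda>i. (nxt ^^ i) d) ` {0..<per d}"
  proof (intro set_eqI iffI)
    fix x assume "x \<in> {(nxt ^^ i) d | i. True}"
    then obtain i where "x = (nxt ^^ i) d" by blast
    then have "x = (nxt ^^ (i mod per d)) d" using funpow_mod_eq[OF per(2)[OF d]] by simp
    moreover have "i mod per d < per d" using per(1)[OF d] by simp
    ultimately show "x \<in> (\<lambda>i. (nxt ^^ i) d) ` {0..<per d}" by auto
  qed auto
  then show e: "orbit_of psi d \<inter> RD = (\<lambda>i. (nxt ^^ i) d) ` {0..<per d}" using orbit_RD[OF d] by simp
  have "inj_on (\<lambda>i. (nxt ^^ i) d) {0..<per d}" by (rule inj_on_funpow_least[OF per(2)[OF d] per_min])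
  then show "card (orbit_of psi d \<inter> RD) = per d" unfolding e by (simp add: card_image)
qed

lemma nxt_RD_iter: "d \<in> RD \<Longrightarrow> (nxt ^^ i) d \<in> RD"
  using nxt_orb by blast

lemma len_ge3:
  assumes n1: "\<not> has_simple_cycle A 1" and n2: "\<not> has_simple_cycle A 2" and d: "d \<in> RD"
  shows "per d \<ge> 3"
proof -
  have p0: "per d > 0" using per(1)[OF d] .
  have "per d \<noteq> 1"
  proof
    assume "per d = 1"
    then have "nxt d = d" using per(2)[OF d] by simp
    then have "vA (H d) = vA (flip (H d))" using chain[OF d] by simp
    then show False using no_loop_dart[OF n1 H_darts[OF d]] by simp
  qed
  moreover have "per d \<noteq> 2"
  proof
    assume p2: "per d = 2"
    define d1 where "d1 = nxt d"
    have d1: "d1 \<in> RD" unfolding d1_def using nxt(1)[OF d] .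
    have bk: "nxt d1 = d" using per(2)[OF d] p2 unfolding d1_def by (simp add: numeral_2_eq_2)
    have c1: "vA (H d1) = vA (flip (H d))" unfolding d1_def by (rule chain[OF d])
    have c2: "vA (H d) = vA (flip (H d1))" using chain[OF d1] bk by simp
    have bt: "H d1 = flip (H d)" by (rule two_darts[OF n1 n2 H_darts[OF d] H_darts[OF d1] c1 c2])
    have bt': "H (nxt d1) = flip (H d1)" using bt bk by simp
    have "snd d \<and> \<not> snd d1" using bt_B[OF d] bt unfolding d1_def by simp
    moreover have "snd d1" using bt_B[OF d1 bt'] by simp
    ultimately show False by simp
  qed
  ultimately show ?thesis using p0 by linarith
qed

lemma len_ge4:
  assumes n1: "\<not> has_simple_cycle A 1" and n2: "\<not> has_simple_cycle A 2" and n3: "\<not> has_simple_cycle A 3"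
    and d: "d \<in> RD"
  shows "per d \<ge> 4"
proof -
  have "per d \<noteq> 3"
  proof
    assume p3: "per d = 3"
    define d1 where "d1 = nxt d"
    define d2 where "d2 = nxt d1"
    have d1: "d1 \<in> RD" unfolding d1_def using nxt(1)[OF d] .
    have d2: "d2 \<in> RD" unfolding d2_def using nxt(1)[OF d1] .
    have bk: "nxt d2 = d" using per(2)[OF d] p3 unfolding d1_def d2_def by (simp add: numeral_3_eq_3)
    show False
    proof (rule three_darts[OF n1 n2 n3 H_darts[OF d] H_darts[OF d1] H_darts[OF d2]])
      show "vA (H d1) = vA (flip (H d))" unfolding d1_def by (rule chain[OF d])
      show "vA (H d2) = vA (flip (H d1))" unfolding d2_def by (rule chain[OF d1])
      show "vA (H d) = vA (flip (H d2))" using chain[OF d2] bk by simp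
    qed
  qed
  then show ?thesis using len_ge3[OF n1 n2 d] by linarith
qed

definition beta where "beta Q = card {x \<in> Q \<inter> RD. bad (flip x)}"

lemma len4_beta:
  assumes n1: "\<not> has_simple_cycle A 1" and n2: "\<not> has_simple_cycle A 2" and n4: "\<not> has_simple_cycle A 4"
    and d: "d \<in> RD" and p4: "per d = 4"
  shows "beta (orbit_of psi d) \<ge> 2"
proof -
  define d1 where "d1 = nxt d"
  define d2 where "d2 = nxt d1"
  define d3 where "d3 = nxt d2"
  have d1: "d1 \<in> RD" unfolding d1_def using nxt(1)[OF d] .
  have d2: "d2 \<in> RD" unfolding d2_def using nxt(1)[OF d1] .
  have d3: "d3 \<in> RD" unfolding d3_def using nxt(1)[OF d2] .
  have bk: "nxt d3 = d" using per(2)[OF d] p4 unfolding d1_def d2_def d3_def by (simp add: eval_nat_numeral)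
  have it: "d1 = (nxt ^^ 1) d" "d2 = (nxt ^^ 2) d" "d3 = (nxt ^^ 3) d"
    unfolding d1_def d2_def d3_def by (simp_all add: eval_nat_numeral)
  have dist: "(nxt ^^ i) d \<noteq> (nxt ^^ j) d" if "i < 4" "j < 4" "i \<noteq> j" for i j
    using inj_on_funpow_least[OF per(2)[OF d] per_min] that p4 unfolding inj_on_def by auto
  have ds: "d \<noteq> d2" "d1 \<noteq> d3" using dist[of 0 2] dist[of 1 3] it by auto
  have c: "vA (H d1) = vA (flip (H d))" "vA (H d2) = vA (flip (H d1))" "vA (H d3) = vA (flip (H d2))"
    "vA (H d) = vA (flip (H d3))"
    using chain[OF d, folded d1_def] chain[OF d1, folded d2_def] chain[OF d2, folded d3_def] chain[OF d3] bk by simp_all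
  have HD: "H d \<in> darts A" "H d1 \<in> darts A" "H d2 \<in> darts A" "H d3 \<in> darts A"
    using H_darts d d1 d2 d3 by auto
  have inQ: "d \<in> orbit_of psi d \<inter> RD" "d1 \<in> orbit_of psi d \<inter> RD" "d2 \<in> orbit_of psi d \<inter> RD" "d3 \<in> orbit_of psi d \<inter> RD"
    using nxt_orb[OF d, of 0] nxt_orb[OF d, of 1] nxt_orb[OF d, of 2] nxt_orb[OF d, of 3] unfolding it by simp_all
  have bb: "bad (flip x) \<longleftrightarrow> H (nxt x) = flip (H x)" for x by (rule bad_flip)
  have some: "H d1 = flip (H d) \<or> H d2 = flip (H d1) \<or> H d3 = flip (H d2) \<or> H d = flip (H d3)"
    by (rule four_darts_nobt[OF n1 n2 n4 HD c])
  have opp1: "H d3 = flip (H d2)" if "H d1 = flip (H d)"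
    by (rule four_darts_bt[OF n1 n2 HD c that])
  have opp2: "H d = flip (H d3)" if "H d2 = flip (H d1)"
    by (rule four_darts_bt[OF n1 n2 HD(2,3,4,1) c(2,3,4,1) that])
  have opp3: "H d1 = flip (H d)" if "H d3 = flip (H d2)"
    by (rule four_darts_bt[OF n1 n2 HD(3,4,1,2) c(3,4,1,2) that])
  have opp4: "H d2 = flip (H d1)" if "H d = flip (H d3)"
    by (rule four_darts_bt[OF n1 n2 HD(4,1,2,3) c(4,1,2,3) that])
  have fin: "finite {x \<in> orbit_of psi d \<inter> RD. bad (flip x)}"
    using finite_subset[OF _ finD, of "{x \<in> orbit_of psi d \<inter> RD. bad (flip x)}"] RD_darts by blast
  have two: "\<exists>x y. x \<noteq> y \<and> x \<in> {x \<in> orbit_of psi d \<inter> RD. bad (flip x)} \<and> y \<in> {x \<in> orbit_of psi d \<inter> RD. bad (flip x)}"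
  proof -
    from some consider "H d1 = flip (H d)" | "H d2 = flip (H d1)" by (metis opp1 opp2 opp3 opp4)
    then show ?thesis
    proof cases
      case 1
      have "bad (flip d)" "bad (flip d2)" using bb[of d] bb[of d2] 1 opp1[OF 1] unfolding d1_def d3_def by auto
      then show ?thesis using ds inQ by blast
    next
      case 2
      have "bad (flip d1)" "bad (flip d3)" using bb[of d1] bb[of d3] 2 opp2[OF 2] bk unfolding d2_def by auto
      then show ?thesis using ds inQ by blast
    qed
  qed
  then obtain x y where "x \<noteq> y" "x \<in> {x \<in> orbit_of psi d \<inter> RD. bad (flip x)}" "y \<in> {x \<in> orbit_of psi d \<inter> RD. bad (flip x)}" by blast
  then have "card {x, y} \<le> card {x \<in> orbit_of psi d \<inter> RD. bad (flip x)}" using fin by (intro card_mono) auto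
  then show ?thesis unfolding beta_def using \<open>x \<noteq> y\<close> by simp
qed

end

context FB begin

lemma A1_rep: assumes "Q \<in> A1" shows "\<exists>d\<in>RD. Q = orbit_of psi d"
proof -
  obtain d0 where d0: "d0 \<in> darts B" "Q = orbit_of psi d0" using assms unfolding A1_def Orbs_def by blast
  obtain d where d: "d \<in> Q" "d \<in> RD" using assms unfolding A1_def by blast
  have "orbit_of psi d = Q" using orb_eq[OF psi_bij finD d0(1)] d d0 by simp
  then show ?thesis using d by blast
qed

lemma A1_disj: assumes "Q1 \<in> A1" "Q2 \<in> A1" "Q1 \<noteq> Q2" shows "Q1 \<inter> Q2 = {}"
proof -
  obtain d1 where d1: "d1 \<in> RD" "Q1 = orbit_of psi d1" using A1_rep[OF assms(1)] by blast
  obtain d2 where d2: "d2 \<in> RD" "Q2 = orbit_of psi d2" using A1_rep[OF assms(2)] by blast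
  show ?thesis
  proof (rule ccontr)
    assume "Q1 \<inter> Q2 \<noteq> {}"
    then obtain z where "z \<in> Q1" "z \<in> Q2" by blast
    then have "orbit_of psi d2 = orbit_of psi d1"
      using orb_eq2[OF psi_bij finD RD_darts[OF d1(1)] _ _ RD_darts[OF d2(1)]] d1 d2 by simp
    then show False using assms(3) d1 d2 by simp
  qed
qed

lemma finRD: "finite RD" using finite_subset[OF _ finD] RD_darts by blast

lemma sum_sub:
  assumes sub: "\<And>Q. Q \<in> A1 \<Longrightarrow> P Q \<subseteq> Q \<inter> RD" and W: "\<And>Q. Q \<in> A1 \<Longrightarrow> P Q \<subseteq> W" and finW: "finite W"
  shows "(\<Sum>Q\<in>A1. card (P Q)) \<le> card W"
proof -
  have fin: "\<forall>Q\<in>A1. finite (P Q)" using sub finRD by (meson finite_Int finite_subset)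
  have dj: "\<forall>Q1\<in>A1. \<forall>Q2\<in>A1. Q1 \<noteq> Q2 \<longrightarrow> P Q1 \<inter> P Q2 = {}" using A1_disj sub by blast
  have "card (\<Union>Q\<in>A1. P Q) = (\<Sum>Q\<in>A1. card (P Q))" by (rule card_UN_disjoint[OF finA1 fin dj])
  moreover have "card (\<Union>Q\<in>A1. P Q) \<le> card W" using W finW by (intro card_mono) auto
  ultimately show ?thesis by simp
qed

lemma sum_len: "(\<Sum>Q\<in>A1. card (Q \<inter> RD)) \<le> card RD"
  by (rule sum_sub[of "\<lambda>Q. Q \<inter> RD"]) (auto simp: finRD)

lemma sum_beta: "(\<Sum>Q\<in>A1. beta Q) \<le> card {x \<in> RD. bad (flip x)}"
  unfolding beta_def by (rule sum_sub) (auto simp: finRD)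

lemma card_RD: "card RD = 2 * CARD('a) * card R"
proof -
  have "RD = (R \<times> (UNIV :: 'a set)) \<times> (UNIV :: bool set)" unfolding RD_def darts_def edges_def using RsubV by auto
  then show ?thesis by (simp add: card_cartesian_product)
qed

lemma card_bad_flip: "card {x \<in> RD. bad (flip x)} = card {b \<in> RD. bad b}"
proof -
  have "{x \<in> RD. bad (flip x)} = flip ` {b \<in> RD. bad b}" by (auto intro: image_eqI[of _ flip "flip x" for x])
  moreover have "inj_on flip {b \<in> RD. bad b}" by (metis flip_flip inj_onI)
  ultimately show ?thesis by (simp add: card_image)
qed

definition grp where "grp b = (vB b, H b)"

lemma nonbad_rep: assumes g: "g \<in> grp ` RD" shows "\<exists>b\<in>RD. grp b = g \<and> \<not> bad b"
proof (rule ccontr)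
  assume nb: "\<not> ?thesis"
  obtain b0 where b0: "b0 \<in> RD" "grp b0 = g" using g by blast
  define G where "G = {b \<in> RD. grp b = g}"
  have allbad: "\<forall>b\<in>G. bad b" using nb unfolding G_def by blast
  have cl: "\<forall>b\<in>G. sR b \<in> G"
  proof
    fix b assume b: "b \<in> G"
    have bRD: "b \<in> RD" using b unfolding G_def by simp
    have "bad b" using allbad b by blast
    then have "H (sR b) = H b" unfolding bad_def .
    moreover have "sR b \<in> RD" "vB (sR b) = vB b" using retk(2)[OF bRD] sR_vtx[OF bRD] by auto
    ultimately show "sR b \<in> G" using b unfolding G_def grp_def by simp
  qed
  have GRD: "G \<subseteq> RD" unfolding G_def by blast
  have b0G: "b0 \<in> G" unfolding G_def using b0 by simp
  obtain a1 a2 :: 'a where a12: "a1 \<noteq> a2" using two_letters by blast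
  have v: "vB b0 \<in> R" by (rule RD_vtx[OF b0(1)])
  have y1: "((vB b0, a1), True) \<in> G" using sR_closure_all[OF GRD cl b0G] out_RD[OF v] by simp
  have y2: "((vB b0, a2), True) \<in> G" using sR_closure_all[OF GRD cl b0G] out_RD[OF v] by simp
  have "grp ((vB b0, a1), True) = grp ((vB b0, a2), True)" using y1 y2 unfolding G_def by simp
  then have "H ((vB b0, a1), True) = H ((vB b0, a2), True)" unfolding grp_def by simp
  then show False using a12 unfolding H_def by simp
qed

lemma card_grp_le: "card (grp ` RD) + card {b \<in> RD. bad b} \<le> card RD"
proof -
  define f where "f = (\<lambda>g. SOME b. b \<in> RD \<and> grp b = g \<and> \<not> bad b)"
  have f: "f g \<in> RD \<and> grp (f g) = g \<and> \<not> bad (f g)" if "g \<in> grp ` RD" for g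
    unfolding f_def using someI_ex[of "\<lambda>b. b \<in> RD \<and> grp b = g \<and> \<not> bad b"] nonbad_rep[OF that] by blast
  have inj: "inj_on f (grp ` RD)" by (metis f inj_onI)
  have img: "f ` (grp ` RD) \<subseteq> {b \<in> RD. \<not> bad b}" using f by blast
  have "card (grp ` RD) \<le> card {b \<in> RD. \<not> bad b}" by (rule card_inj_on_le[OF inj img]) (simp add: finRD)
  moreover have "card {b \<in> RD. \<not> bad b} + card {b \<in> RD. bad b} = card RD"
  proof -
    have "{b \<in> RD. \<not> bad b} \<union> {b \<in> RD. bad b} = RD" by blast
    moreover have "{b \<in> RD. \<not> bad b} \<inter> {b \<in> RD. bad b} = {}" by blast
    ultimately show ?thesis using finRD card_Un_disjoint[of "{b \<in> RD. \<not> bad b}" "{b \<in> RD. bad b}"] by simp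
  qed
  ultimately show ?thesis by simp
qed

lemma card_grp_ge: "CARD('a) * card R + CARD('a) * card (states A) \<le> card (grp ` RD)"
proof -
  define Out where "Out = {b \<in> RD. snd b}"
  define In where "In = {b \<in> RD. \<not> snd b}"
  have finIO: "finite Out" "finite In" unfolding Out_def In_def using finRD by simp_all
  have outeq: "Out = (\<lambda>e. (e, True)) ` (R \<times> (UNIV :: 'a set))"
    unfolding Out_def RD_def darts_iff using RsubV by (auto intro: image_eqI[of _ _ "fst x" for x])
  have cOut: "card Out = CARD('a) * card R" unfolding outeq by (simp add: card_image inj_on_def card_cartesian_product)
  have injOut: "inj_on grp Out"
  proof (rule inj_onI)
    fix x y assume "x \<in> Out" "y \<in> Out" "grp x = grp y"
    then show "x = y" unfolding Out_def grp_def H_def dart_vertex_def by (cases x, cases y) auto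
  qed
  have c1: "card (grp ` Out) = CARD('a) * card R" using card_image[OF injOut] cOut by simp
  have Ain: "{D \<in> darts A. \<not> snd D} \<subseteq> H ` In"
  proof
    fix D assume D: "D \<in> {D \<in> darts A. \<not> snd D}"
    obtain u a where Du: "D = ((u, a), False)" using D by (cases D) auto
    have "((u, a), False) \<in> darts A" using D Du by simp
    then have u: "u \<in> states A" unfolding darts_iff by simp
    obtain q where q: "q \<in> R" "h q = u" using hom_surj[OF min dfaB lB u] unfolding h_def R_def by blast
    have "((q, a), False) \<in> In" unfolding In_def RD_def darts_iff using q RsubV by auto
    moreover have "H ((q, a), False) = D" unfolding H_def Du using q by simp
    ultimately show "D \<in> H ` In" by (metis image_eqI)
  qed
  have cA: "card {D \<in> darts A. \<not> snd D} = CARD('a) * card (states A)"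
  proof -
    have "{D \<in> darts A. \<not> snd D} = (\<lambda>e. (e, False)) ` (states A \<times> (UNIV :: 'a set))"
      unfolding darts_iff by (auto intro: image_eqI[of _ _ "fst x" for x])
    then show ?thesis by (simp add: card_image inj_on_def card_cartesian_product)
  qed
  have "card {D \<in> darts A. \<not> snd D} \<le> card (H ` In)" using Ain finIO(2) by (intro card_mono) auto
  also have "H ` In = snd ` (grp ` In)" unfolding grp_def by (auto simp: image_image)
  also have "card (snd ` (grp ` In)) \<le> card (grp ` In)" using finIO(2) by (intro card_image_le) simp
  finally have c2: "CARD('a) * card (states A) \<le> card (grp ` In)" using cA by simp
  have dj: "grp ` Out \<inter> grp ` In = {}" unfolding Out_def In_def grp_def H_def by auto
  have "card (grp ` Out \<union> grp ` In) = card (grp ` Out) + card (grp ` In)"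
    using dj finIO by (simp add: card_Un_disjoint)
  moreover have "grp ` Out \<union> grp ` In \<subseteq> grp ` RD" unfolding Out_def In_def by blast
  ultimately have "card (grp ` Out) + card (grp ` In) \<le> card (grp ` RD)"
    by (metis card_mono finRD finite_imageI)
  then show ?thesis using c1 c2 by simp
qed

end

context FB begin

lemma ell_per: assumes "Q \<in> A1" shows "\<exists>d\<in>RD. Q = orbit_of psi d \<and> card (Q \<inter> RD) = per d"
  using A1_rep[OF assms] orbit_RD_per(2) by blast

lemma nA_le: "card (states A) \<le> card R"
  unfolding R_def by (rule minimal_le_reach[OF min dfaB lB])

lemma bound_main:
  assumes noc: "\<forall>k. k \<le> rho CARD('a) - 1 \<longrightarrow> \<not> has_simple_cycle A k"
    and eq: "int (card (states B)) - int (card (edges B)) + int (num_faces B \<sigma>) = 2 * int (num_components B) - 2 * int g"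
  shows "10 * int g \<ge> 10 + int (card (states A))"
proof -
  define m where "m = CARD('a)"
  define n where "n = card R"
  define nA where "nA = card (states A)"
  define F where "F = card A1"
  have lb: "2 * int g \<ge> 2 + (int m - 1) * int n - int F" using genus_lb[OF eq] unfolding m_def n_def F_def .
  have nAn: "nA \<le> n" unfolding nA_def n_def by (rule nA_le)
  have rho3: "rho m \<ge> 3" unfolding rho_def by simp
  have n1: "\<not> has_simple_cycle A 1" and n2: "\<not> has_simple_cycle A 2"
    using noc rho3 unfolding m_def by auto
  have sl: "(\<Sum>Q\<in>A1. card (Q \<inter> RD)) \<le> 2 * m * n" using sum_len card_RD unfolding m_def n_def by simp
  consider "m \<ge> 4" | "m = 3" | "m = 2" using m2 unfolding m_def by linarith
  then show ?thesis
  proof cases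
    case 1
    have "\<forall>Q\<in>A1. 3 \<le> card (Q \<inter> RD)" using ell_per len_ge3[OF n1 n2] by metis
    then have "card A1 * 3 \<le> (\<Sum>Q\<in>A1. card (Q \<inter> RD))" using sum_bounded_below[of A1 3 "\<lambda>Q. card (Q \<inter> RD)"] by simp
    then have "3 * F \<le> 2 * m * n" using sl unfolding F_def by simp
    then have f: "3 * int F \<le> 2 * int m * int n" by (metis of_nat_le_iff of_nat_mult of_nat_numeral)
    have mn: "int m * int n \<ge> 4 * int n" using 1 by (simp add: mult_right_mono)
    have "6 * int g \<ge> 6 + int n" using lb f mn by (simp add: algebra_simps)
    then show ?thesis using nAn unfolding nA_def by simp
  next
    case 2
    have n3: "\<not> has_simple_cycle A 3" using noc 2 unfolding m_def rho_def by simp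
    have "\<forall>Q\<in>A1. 4 \<le> card (Q \<inter> RD)" using ell_per len_ge4[OF n1 n2 n3] by metis
    then have "card A1 * 4 \<le> (\<Sum>Q\<in>A1. card (Q \<inter> RD))" using sum_bounded_below[of A1 4 "\<lambda>Q. card (Q \<inter> RD)"] by simp
    then have "4 * F \<le> 6 * n" using sl 2 unfolding F_def by simp
    then have "4 * int g \<ge> 4 + int n" using lb 2 by simp
    then show ?thesis using nAn unfolding nA_def by simp
  next
    case 3
    have n3: "\<not> has_simple_cycle A 3" and n4: "\<not> has_simple_cycle A 4"
      using noc 3 unfolding m_def rho_def by simp_all
    have w: "10 \<le> 2 * card (Q \<inter> RD) + beta Q" if QA: "Q \<in> A1" for Q
    proof -
      obtain d where d: "d \<in> RD" "Q = orbit_of psi d" "card (Q \<inter> RD) = per d" using ell_per[OF QA] by blast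
      have p4: "per d \<ge> 4" by (rule len_ge4[OF n1 n2 n3 d(1)])
      show ?thesis
      proof (cases "per d = 4")
        case True
        then have "beta Q \<ge> 2" using len4_beta[OF n1 n2 n4 d(1) True] d(2) by simp
        then show ?thesis using d(3) True by simp
      next
        case False then show ?thesis using d(3) p4 by simp
      qed
    qed
    then have "card A1 * 10 \<le> (\<Sum>Q\<in>A1. 2 * card (Q \<inter> RD) + beta Q)"
      using sum_bounded_below[of A1 10 "\<lambda>Q. 2 * card (Q \<inter> RD) + beta Q"] by simp
    also have "\<dots> = 2 * (\<Sum>Q\<in>A1. card (Q \<inter> RD)) + (\<Sum>Q\<in>A1. beta Q)" by (simp add: sum.distrib sum_distrib_left)
    finally have s1: "10 * F \<le> 2 * (\<Sum>Q\<in>A1. card (Q \<inter> RD)) + (\<Sum>Q\<in>A1. beta Q)" unfolding F_def by simp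
    have sb: "(\<Sum>Q\<in>A1. beta Q) \<le> card {b \<in> RD. bad b}" using sum_beta card_bad_flip by simp
    have gb: "card (grp ` RD) + card {b \<in> RD. bad b} \<le> card RD" by (rule card_grp_le)
    have gg: "m * n + m * nA \<le> card (grp ` RD)" using card_grp_ge unfolding m_def n_def nA_def .
    have "10 * F \<le> 10 * n - 2 * nA" using s1 sl sb gb gg card_RD 3 unfolding m_def n_def nA_def by simp
    then have "10 * int F \<le> 10 * int n - 2 * int nA" using nAn by linarith
    then have "10 * int g \<ge> 10 + int nA" using lb 3 by simp
    then show ?thesis unfolding nA_def .
  qed
qed

end

lemma dfa_genus_attained:
  fixes B :: "('a::finite) dfa"
  assumes dfa: "is_dfa B"
  shows "\<exists>\<sigma>. rotation_system B \<sigma> \<and> int (card (states B)) - int (card (edges B)) + int (num_faces B \<sigma>)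
        = 2 * int (num_components B) - 2 * int (dfa_genus B)"
proof -
  obtain \<sigma> where rot: "rotation_system B \<sigma>" using rot_exists[OF dfa] by blast
  obtain g where "int (card (states B)) - int (card (edges B)) + int (num_faces B \<sigma>)
        = 2 * int (num_components B) - 2 * int g" using euler_exists[OF dfa rot] by blast
  then have ex: "\<exists>g \<sigma>. rotation_system B \<sigma> \<and> int (card (states B)) - int (card (edges B)) + int (num_faces B \<sigma>)
        = 2 * int (num_components B) - 2 * int g" using rot by blast
  show ?thesis using LeastI_ex[OF ex] unfolding dfa_genus_def by blast
qed

lemma genus_bound_all:
  fixes A B :: "('a::finite) dfa"
  assumes min: "minimal_dfa A L" and dfaB: "is_dfa B" and lB: "lang B = L" and m2: "CARD('a) \<ge> 2"
    and noc: "\<forall>k. k \<le> rho CARD('a) - 1 \<longrightarrow> \<not> has_simple_cycle A k"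
  shows "10 * int (dfa_genus B) \<ge> 10 + int (card (states A))"
proof -
  obtain \<sigma> where rot: "rotation_system B \<sigma>" and eq: "int (card (states B)) - int (card (edges B)) + int (num_faces B \<sigma>)
        = 2 * int (num_components B) - 2 * int (dfa_genus B)" using dfa_genus_attained[OF dfaB] by blast
  have fb: "FB A B L \<sigma>" unfolding FB_def using min dfaB lB rot m2 by simp
  show ?thesis by (rule FB.bound_main[OF fb noc eq])
qed

lemma lang_genus_attained:
  assumes "is_dfa A" "lang A = L"
  shows "\<exists>B. is_dfa B \<and> lang B = L \<and> dfa_genus B = lang_genus L"
proof -
  have ex: "\<exists>g. \<exists>B. is_dfa B \<and> lang B = L \<and> dfa_genus B = g" using assms by blast
  show ?thesis using LeastI_ex[OF ex] unfolding lang_genus_def by blast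
qed

lemma states_pos: "is_dfa A \<Longrightarrow> card (states A) \<ge> 1"
  unfolding is_dfa_def by (metis One_nat_def Suc_leI card_gt_0_iff empty_iff)

lemma classC_bound:
  fixes L :: "('a::finite) list set"
  assumes L: "L \<in> classC" and m2: "CARD('a) \<ge> 2"
  shows "\<exists>A. minimal_dfa A L \<and> 10 * int (lang_genus L) \<ge> 10 + int (card (states A))"
proof -
  obtain A where A: "minimal_dfa A L" and noc: "\<forall>k. k \<le> rho CARD('a) - 1 \<longrightarrow> \<not> has_simple_cycle A k"
    using L unfolding classC_def by blast
  have dfaA: "is_dfa A" "lang A = L" using A unfolding minimal_dfa_def by auto
  obtain B where B: "is_dfa B" "lang B = L" "dfa_genus B = lang_genus L" using lang_genus_attained[OF dfaA] by blast
  show ?thesis using genus_bound_all[OF A B(1,2) m2 noc] B(3) A by auto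
qed

definition mkd :: "nat \<Rightarrow> nat set \<Rightarrow> (nat \<Rightarrow> 'a \<Rightarrow> nat) \<Rightarrow> 'a dfa" where
  "mkd i Fn t = \<lparr>states = {}, init = i, final = Fn, trans = t\<rparr>"

lemma lang_mkd: "lang (mkd i Fn t) = {w. foldl t i w \<in> Fn}" unfolding lang_def mkd_def by simp

lemma finite_langs:
  "finite {lang A | A :: ('a::finite) dfa. is_dfa A \<and> card (states A) \<le> N}"
proof -
  define T where "T = {t :: nat \<Rightarrow> 'a \<Rightarrow> nat. \<forall>q a. (N \<le> q \<longrightarrow> t q a = 0) \<and> t q a \<le> N}"
  define rr where "rr = (\<lambda>t :: nat \<Rightarrow> 'a \<Rightarrow> nat. restrict (\<lambda>p. t (fst p) (snd p)) ({0..<N} \<times> (UNIV :: 'a set)))"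
  have injT: "inj_on rr T"
  proof (rule inj_onI)
    fix t1 t2 assume t: "t1 \<in> T" "t2 \<in> T" "rr t1 = rr t2"
    show "t1 = t2"
    proof (intro ext)
      fix q a
      show "t1 q a = t2 q a"
      proof (cases "q < N")
        case True
        then have "rr t1 (q, a) = rr t2 (q, a)" using t by simp
        then show ?thesis using True unfolding rr_def by simp
      next
        case False then show ?thesis using t unfolding T_def by simp
      qed
    qed
  qed
  have imgT: "rr ` T \<subseteq> PiE ({0..<N} \<times> (UNIV :: 'a set)) (\<lambda>_. {0..N})"
  proof
    fix x assume "x \<in> rr ` T"
    then obtain t where t: "t \<in> T" "x = rr t" by blast
    have "\<forall>p\<in>{0..<N} \<times> (UNIV :: 'a set). rr t p \<in> {0..N}" using t(1) unfolding rr_def T_def by auto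
    moreover have "rr t \<in> extensional ({0..<N} \<times> (UNIV :: 'a set))" unfolding rr_def by simp
    ultimately show "x \<in> PiE ({0..<N} \<times> (UNIV :: 'a set)) (\<lambda>_. {0..N})" using t(2) by (simp add: PiE_iff)
  qed
  have finT: "finite T"
    using finite_imageD[OF finite_subset[OF imgT] injT] by (simp add: finite_PiE)
  have sub: "{lang A | A :: 'a dfa. is_dfa A \<and> card (states A) \<le> N} \<subseteq>
      (\<lambda>(i, Fn, t). lang (mkd i Fn t)) ` ({0..<N} \<times> Pow {0..<N} \<times> T)"
  proof
    fix L assume "L \<in> {lang A | A :: 'a dfa. is_dfa A \<and> card (states A) \<le> N}"
    then obtain A :: "'a dfa" where A: "is_dfa A" "card (states A) \<le> N" "L = lang A" by blast
    define k where "k = card (states A)"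
    have finS: "finite (states A)" using A unfolding is_dfa_def by simp
    obtain f where f: "bij_betw f (states A) {0..<k}" using ex_bij_betw_finite_nat[OF finS] unfolding k_def by blast
    define g where "g = inv_into (states A) f"
    define t where "t = (\<lambda>q a. if q < k then f (trans A (g q) a) else 0)"
    have gq: "g q \<in> states A" "f (g q) = q" if "q < k" for q
      using f that unfolding g_def bij_betw_def
      by (auto intro: inv_into_into f_inv_into_f)
    have gf: "g (f p) = p" if "p \<in> states A" for p using f that unfolding g_def bij_betw_def by simp
    have fin: "f p < k" if "p \<in> states A" for p using f that unfolding bij_betw_def by auto
    have trA: "trans A p a \<in> states A" if "p \<in> states A" for p a using A(1) that unfolding is_dfa_def by blast
    have fold: "foldl t (f p) w = f (foldl (trans A) p w)" if "p \<in> states A" for p w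
      using that
    proof (induct w arbitrary: p)
      case (Cons a w)
      have "t (f p) a = f (trans A p a)" unfolding t_def using fin[OF Cons(2)] gf[OF Cons(2)] by simp
      then show ?case using Cons(1)[OF trA[OF Cons(2)]] by simp
    qed simp
    have initA: "init A \<in> states A" using A(1) unfolding is_dfa_def by simp
    have finalA: "final A \<subseteq> states A" using A(1) unfolding is_dfa_def by simp
    have injf: "inj_on f (states A)" using f unfolding bij_betw_def by simp
    have memF: "(f x \<in> f ` final A) = (x \<in> final A)" if "x \<in> states A" for x
      using injf finalA that unfolding inj_on_def by blast
    have "lang (mkd (f (init A)) (f ` final A) t) = {w. foldl t (f (init A)) w \<in> f ` final A}" by (rule lang_mkd)
    also have "\<dots> = lang A"
      unfolding lang_def using fold[OF initA] memF foldl_in[OF A(1) initA] by auto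
    finally have "lang (mkd (f (init A)) (f ` final A) t) = lang A" .
    moreover have "f (init A) \<in> {0..<N}" using fin[OF initA] A(2) unfolding k_def by simp
    moreover have "f ` final A \<in> Pow {0..<N}"
    proof -
      have "\<forall>x\<in>final A. f x < N" using fin finalA A(2) unfolding k_def by (meson less_le_trans subsetD)
      then show ?thesis by auto
    qed
    moreover have "t \<in> T" unfolding T_def
    proof (intro CollectI allI)
      fix q a
      show "(N \<le> q \<longrightarrow> t q a = 0) \<and> t q a \<le> N"
      proof (cases "q < k")
        case True
        have "f (trans A (g q) a) < k" using fin[OF trA[OF gq(1)[OF True]]] .
        then show ?thesis using True A(2) unfolding t_def k_def by simp
      next
        case False then show ?thesis unfolding t_def by simp
      qed
    qed
    ultimately show "L \<in> (\<lambda>(i, Fn, t). lang (mkd i Fn t)) ` ({0..<N} \<times> Pow {0..<N} \<times> T)"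
      using A(3) by (auto intro!: image_eqI[of _ _ "(f (init A), f ` final A, t)"])
  qed
  show ?thesis by (rule finite_subset[OF sub]) (simp add: finT)
qed

theorem mainTheorem9:
  assumes "CARD('a::finite) \<ge> 2"
  shows "(\<forall>L \<in> (classC :: 'a list set set). lang_genus L \<ge> 2) \<and>
         (\<forall>g::nat. g \<ge> 2 \<longrightarrow> finite {L \<in> (classC :: 'a list set set). lang_genus L = g})"
proof (intro conjI ballI allI impI)
  fix L :: "'a list set" assume L: "L \<in> classC"
  obtain A where A: "minimal_dfa A L" "10 * int (lang_genus L) \<ge> 10 + int (card (states A))"
    using classC_bound[OF L assms] by blast
  have "is_dfa A" using A(1) unfolding minimal_dfa_def by simp
  then have "card (states A) \<ge> 1" by (rule states_pos)
  then show "lang_genus L \<ge> 2" using A(2) by simp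
next
  fix g :: nat assume g: "g \<ge> 2"
  have "{L \<in> (classC :: 'a list set set). lang_genus L = g} \<subseteq> {lang A | A :: 'a dfa. is_dfa A \<and> card (states A) \<le> 10 * g}"
  proof
    fix L assume L: "L \<in> {L \<in> (classC :: 'a list set set). lang_genus L = g}"
    obtain A where A: "minimal_dfa A L" "10 * int (lang_genus L) \<ge> 10 + int (card (states A))"
      using classC_bound[OF _ assms] L by blast
    have "card (states A) \<le> 10 * g" using A(2) L by simp
    then show "L \<in> {lang A | A :: 'a dfa. is_dfa A \<and> card (states A) \<le> 10 * g}"
      using A(1) unfolding minimal_dfa_def by blast
  qed
  then show "finite {L \<in> (classC :: 'a list set set). lang_genus L = g}"
    using finite_langs finite_subset by blast
qed

end
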